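(* Let $t\ge2$, $n_1,\dots,n_t\ge1$, $n=n_1+\dots+n_t$, and let $G=K_{n_1,\dots,n_t}$ be the complete multipartite graph with partite sets $Y_1,\dots,Y_t$, $|Y_i|=n_i$. Then the inclusion-minimal skew forcing sets of $G$ are exactly the sets $V(G)\setminus\{u,v\}$ with $u,v$ in different partite sets; these are exactly the vertices of $\mathfrak{Z}^-(G)$ of cardinality $n-2$, and each has degree $2$ in $\mathfrak{Z}^-(G)$. Every set $V(G)\setminus\{y\}$ with $y\in Y_i$ is a skew forcing set and has degree $n-n_i+1$ in $\mathfrak{Z}^-(G)$. Moreover $\mathfrak{Z}^-(G)$ is unique: if $G'$ is a graph with no isolated vertices and $\mathfrak{Z}^-(G')\cong\mathfrak{Z}^-(G)$, then $G'\cong G$.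
   Context: All graphs are finite, simple, undirected. Skew color change rule: with $W$ the set of white (non-blue) vertices, any vertex $u$ (blue or white) may color a white vertex $w$ blue if $N(u)\cap W=\{w\}$. $S$ is a skew forcing set if starting with exactly $S$ blue and applying the rule repeatedly, all vertices become blue. The skew TAR graph $\mathfrak{Z}^-(G)$ has as vertices the skew forcing sets of $G$, with $S_1S_2$ an edge iff $|S_1\ominus S_2|=1$ (symmetric difference). A complete multipartite graph $K_{n_1,\dots,n_t}$ has vertex set partitioned into sets of sizes $n_1,\dots,n_t$, with exactly the edges between vertices in distinct parts. *)

theory Defs
  imports Main
begin

definition simple_graph :: "'a set \<Rightarrow> ('a \<Rightarrow> 'a \<Rightarrow> bool) \<Rightarrow> bool" where
  "simple_graph V E \<longleftrightarrow> finite V \<and> (\<forall>x y. E x y \<longrightarrow> x \<in> V \<and> y \<in> V)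
     \<and> (\<forall>x y. E x y \<longrightarrow> E y x) \<and> (\<forall>x. \<not> E x x)"

definition nbhd :: "('a \<Rightarrow> 'a \<Rightarrow> bool) \<Rightarrow> 'a \<Rightarrow> 'a set" where
  "nbhd E u = {v. E u v}"

text \<open>One application of the skew color change rule: blue set B becomes
  insert w B, where w is white and some vertex u (blue or white) has w as its
  unique white neighbour.\<close>
definition skew_step :: "'a set \<Rightarrow> ('a \<Rightarrow> 'a \<Rightarrow> bool) \<Rightarrow> 'a set \<Rightarrow> 'a set \<Rightarrow> bool" where
  "skew_step V E B B' \<longleftrightarrow> (\<exists>u\<in>V. \<exists>w\<in>V - B.
      nbhd E u \<inter> (V - B) = {w} \<and> B' = insert w B)"

definition skew_forcing_set :: "'a set \<Rightarrow> ('a \<Rightarrow> 'a \<Rightarrow> bool) \<Rightarrow> 'a set \<Rightarrow> bool" where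
  "skew_forcing_set V E S \<longleftrightarrow> S \<subseteq> V \<and> (skew_step V E)\<^sup>*\<^sup>* S V"

definition minimal_skew_forcing_set :: "'a set \<Rightarrow> ('a \<Rightarrow> 'a \<Rightarrow> bool) \<Rightarrow> 'a set \<Rightarrow> bool" where
  "minimal_skew_forcing_set V E S \<longleftrightarrow> skew_forcing_set V E S \<and>
      (\<forall>T. T \<subset> S \<longrightarrow> \<not> skew_forcing_set V E T)"

definition skew_TAR_vertices :: "'a set \<Rightarrow> ('a \<Rightarrow> 'a \<Rightarrow> bool) \<Rightarrow> 'a set set" where
  "skew_TAR_vertices V E = {S. skew_forcing_set V E S}"

definition TAR_adj :: "'a set \<Rightarrow> 'a set \<Rightarrow> bool" where
  "TAR_adj S T \<longleftrightarrow> card ((S - T) \<union> (T - S)) = 1"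

definition skew_TAR_degree :: "'a set \<Rightarrow> ('a \<Rightarrow> 'a \<Rightarrow> bool) \<Rightarrow> 'a set \<Rightarrow> nat" where
  "skew_TAR_degree V E S = card {T \<in> skew_TAR_vertices V E. TAR_adj S T}"

definition graph_iso :: "'a set \<Rightarrow> ('a \<Rightarrow> 'a \<Rightarrow> bool) \<Rightarrow> 'b set \<Rightarrow> ('b \<Rightarrow> 'b \<Rightarrow> bool) \<Rightarrow> bool" where
  "graph_iso V E V' E' \<longleftrightarrow> (\<exists>f. bij_betw f V V' \<and>
      (\<forall>x\<in>V. \<forall>y\<in>V. E x y \<longleftrightarrow> E' (f x) (f y)))"

text \<open>Complete multipartite graph K_{ns 0, ..., ns (t-1)}: vertex (i,j) is the
  j-th vertex of part Y_i.\<close>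
definition cmp_V :: "nat \<Rightarrow> (nat \<Rightarrow> nat) \<Rightarrow> (nat \<times> nat) set" where
  "cmp_V t ns = {(i, j). i < t \<and> j < ns i}"

definition cmp_E :: "nat \<Rightarrow> (nat \<Rightarrow> nat) \<Rightarrow> nat \<times> nat \<Rightarrow> nat \<times> nat \<Rightarrow> bool" where
  "cmp_E t ns x y \<longleftrightarrow> x \<in> cmp_V t ns \<and> y \<in> cmp_V t ns \<and> fst x \<noteq> fst y"

end

theory Submission
  imports Defs
begin


lemma step_subset: "skew_step V E B B' \<Longrightarrow> B \<subseteq> V \<Longrightarrow> B' \<subseteq> V"
  unfolding skew_step_def by auto

lemma step_mono:
  assumes "skew_step V E B B'" "B \<subseteq> C" "C \<subseteq> V"
  shows "(skew_step V E)\<^sup>*\<^sup>* C (C \<union> B')"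
proof -
  obtain u w where u: "u \<in> V" and w: "w \<in> V - B" and nb: "nbhd E u \<inter> (V - B) = {w}"
    and B': "B' = insert w B"
    using assms(1) unfolding skew_step_def by blast
  show ?thesis
  proof (cases "w \<in> C")
    case True
    then have "C \<union> B' = C" using B' assms(2) by auto
    then show ?thesis by simp
  next
    case False
    have "nbhd E u \<inter> (V - C) = {w}" using nb assms(2) False w by blast
    then have "skew_step V E C (insert w C)" unfolding skew_step_def using u w False by blast
    moreover have "insert w C = C \<union> B'" using B' assms(2) by auto
    ultimately show ?thesis by simp
  qed
qed

lemma rt_mono:
  assumes "(skew_step V E)\<^sup>*\<^sup>* B V" "B \<subseteq> C" "C \<subseteq> V"
  shows "(skew_step V E)\<^sup>*\<^sup>* C V"
  using assms
proof (induction arbitrary: C rule: converse_rtranclp_induct)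
  case base
  then have "C = V" by blast
  then show ?case by simp
next
  case (step B B')
  have "B' \<subseteq> V" using step_subset[OF step(1)] step(4,5) by blast
  then have "C \<union> B' \<subseteq> V" using step(5) by blast
  then have "(skew_step V E)\<^sup>*\<^sup>* (C \<union> B') V" using step(3) by blast
  moreover have "(skew_step V E)\<^sup>*\<^sup>* C (C \<union> B')" using step_mono[OF step(1) step(4,5)] .
  ultimately show ?case by simp
qed

lemma forcing_mono:
  "skew_forcing_set V E S \<Longrightarrow> S \<subseteq> T \<Longrightarrow> T \<subseteq> V \<Longrightarrow> skew_forcing_set V E T"
  unfolding skew_forcing_set_def using rt_mono by blast

lemma forcing_top: "skew_forcing_set V E V"
  unfolding skew_forcing_set_def by simp

lemma forcing_single:
  assumes "y \<in> V" "x \<in> V" "E x y"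
  shows "skew_forcing_set V E (V - {y})"
proof -
  have "nbhd E x \<inter> (V - (V - {y})) = {y}" using assms unfolding nbhd_def by auto
  then have "skew_step V E (V - {y}) (insert y (V - {y}))"
    unfolding skew_step_def using assms by blast
  moreover have "insert y (V - {y}) = V" using assms by auto
  ultimately show ?thesis unfolding skew_forcing_set_def by auto
qed

lemma forcing_pair:
  assumes "u \<in> V" "v \<in> V" "u \<noteq> v" "x \<in> V" "E x u" "\<not> E x v" "x' \<in> V" "E x' v"
  shows "skew_forcing_set V E (V - {u, v})"
proof -
  have "nbhd E x \<inter> (V - (V - {u, v})) = {u}" using assms unfolding nbhd_def by auto
  then have "skew_step V E (V - {u, v}) (insert u (V - {u, v}))"
    unfolding skew_step_def using assms by blast
  moreover have "insert u (V - {u, v}) = V - {v}" using assms by auto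
  ultimately have "skew_step V E (V - {u, v}) (V - {v})" by simp
  moreover have "skew_forcing_set V E (V - {v})" using forcing_single assms by metis
  ultimately show ?thesis unfolding skew_forcing_set_def
    using converse_rtranclp_into_rtranclp[of "skew_step V E"] by blast
qed

lemma forcing_triple:
  assumes "u \<in> V" "v \<in> V" "x \<in> V" "u \<noteq> v" "x \<noteq> u" "x \<noteq> v"
    "E u x" "\<not> E u v" "\<not> E u u" "\<not> E x v" "E x u" "x' \<in> V" "E x' v"
  shows "skew_forcing_set V E (V - {u, v, x})"
proof -
  have "nbhd E u \<inter> (V - (V - {u, v, x})) = {x}" using assms unfolding nbhd_def by auto
  then have "skew_step V E (V - {u, v, x}) (insert x (V - {u, v, x}))"
    unfolding skew_step_def using assms by blast
  moreover have "insert x (V - {u, v, x}) = V - {u, v}" using assms by auto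
  ultimately have "skew_step V E (V - {u, v, x}) (V - {u, v})" by simp
  moreover have "skew_forcing_set V E (V - {u, v})" using forcing_pair assms by metis
  ultimately show ?thesis unfolding skew_forcing_set_def
    using converse_rtranclp_into_rtranclp[of "skew_step V E"] by blast
qed

lemma twins_not_forcing:
  assumes "nbhd E u = nbhd E v" "\<forall>a b. E a b \<longrightarrow> E b a" "u \<in> V" "v \<in> V" "u \<noteq> v"
  shows "\<not> skew_forcing_set V E (V - {u, v})"
proof
  assume "skew_forcing_set V E (V - {u, v})"
  then have r: "(skew_step V E)\<^sup>*\<^sup>* (V - {u, v}) V" unfolding skew_forcing_set_def by blast
  have ne: "V - {u, v} \<noteq> V" using assms by auto
  from r ne obtain B' where "skew_step V E (V - {u, v}) B'"
    by (cases rule: converse_rtranclpE) auto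
  then obtain x w where nb: "nbhd E x \<inter> (V - (V - {u, v})) = {w}"
    unfolding skew_step_def by blast
  have "V - (V - {u, v}) = {u, v}" using assms by auto
  with nb have nb2: "nbhd E x \<inter> {u, v} = {w}" by simp
  have "u \<in> nbhd E x \<longleftrightarrow> x \<in> nbhd E u" using assms(2) unfolding nbhd_def by blast
  also have "\<dots> \<longleftrightarrow> x \<in> nbhd E v" using assms(1) by simp
  also have "\<dots> \<longleftrightarrow> v \<in> nbhd E x" using assms(2) unfolding nbhd_def by blast
  finally have "u \<in> nbhd E x \<longleftrightarrow> v \<in> nbhd E x" .
  with nb2 show False using assms(5) by (metis doubleton_eq_iff insert_absorb2 Int_insert_right_if1 Int_insert_right_if0 inf_bot_right singleton_insert_inj_eq empty_not_insert)
qed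

lemma symdiff1:
  "card ((X - Y) \<union> (Y - X)) = 1 \<longleftrightarrow> (\<exists>s. (s \<in> X \<and> Y = X - {s}) \<or> (s \<notin> X \<and> Y = insert s X))"
proof
  assume "card ((X - Y) \<union> (Y - X)) = 1"
  then obtain s where s: "(X - Y) \<union> (Y - X) = {s}" using card_1_singleton_iff[of "(X - Y) \<union> (Y - X)"] by auto
  have sx: "\<And>x. (x \<in> X \<and> x \<notin> Y) \<or> (x \<in> Y \<and> x \<notin> X) \<longleftrightarrow> x = s"
    using s unfolding set_eq_iff by simp
  show "\<exists>s. (s \<in> X \<and> Y = X - {s}) \<or> (s \<notin> X \<and> Y = insert s X)"
  proof (cases "s \<in> X")
    case True
    have "Y = X - {s}"
    proof (rule set_eqI)
      fix x show "x \<in> Y \<longleftrightarrow> x \<in> X - {s}" using sx[of x] sx[of s] True by auto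
    qed
    then show ?thesis using True by blast
  next
    case False
    have "Y = insert s X"
    proof (rule set_eqI)
      fix x show "x \<in> Y \<longleftrightarrow> x \<in> insert s X" using sx[of x] sx[of s] False by auto
    qed
    then show ?thesis using False by blast
  qed
next
  assume "\<exists>s. (s \<in> X \<and> Y = X - {s}) \<or> (s \<notin> X \<and> Y = insert s X)"
  then obtain s where h: "(s \<in> X \<and> Y = X - {s}) \<or> (s \<notin> X \<and> Y = insert s X)" by blast
  have "(X - Y) \<union> (Y - X) = {s}"
  proof (rule disjE[OF h])
    assume "s \<in> X \<and> Y = X - {s}" then show ?thesis by auto
  next
    assume "s \<notin> X \<and> Y = insert s X" then show ?thesis by auto
  qed
  then show "card ((X - Y) \<union> (Y - X)) = 1" by simp
qed


lemma adj_compl: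
  assumes "A \<subseteq> V" "B \<subseteq> V"
  shows "TAR_adj (V - A) (V - B) \<longleftrightarrow> card ((A - B) \<union> (B - A)) = 1"
proof -
  have "((V - A) - (V - B)) \<union> ((V - B) - (V - A)) = (B - A) \<union> (A - B)" using assms by blast
  then show ?thesis unfolding TAR_adj_def by (simp add: Un_commute)
qed

lemma adj_sym: "TAR_adj S T \<longleftrightarrow> TAR_adj T S"
  unfolding TAR_adj_def by (simp add: Un_commute)



definition bad :: "(nat \<times> nat) set \<Rightarrow> bool" where
  "bad W \<longleftrightarrow> (\<exists>a\<in>W. \<exists>b\<in>W. \<exists>c\<in>W. a \<noteq> b \<and> a \<noteq> c \<and> b \<noteq> c)
     \<or> (\<exists>a\<in>W. \<exists>b\<in>W. a \<noteq> b \<and> fst a = fst b)"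

definition adm :: "(nat \<times> nat) set \<Rightarrow> (nat \<times> nat) set \<Rightarrow> bool" where
  "adm V A \<longleftrightarrow> A \<subseteq> V \<and> (A = {} \<or> (\<exists>y\<in>V. A = {y}) \<or>
     (\<exists>u\<in>V. \<exists>v\<in>V. fst u \<noteq> fst v \<and> A = {u, v}))"

lemma bad_intro2: "a \<in> W \<Longrightarrow> b \<in> W \<Longrightarrow> a \<noteq> b \<Longrightarrow> fst a = fst b \<Longrightarrow> bad W"
  unfolding bad_def by blast

lemma bad_intro3: "a \<in> W \<Longrightarrow> b \<in> W \<Longrightarrow> c \<in> W \<Longrightarrow> a \<noteq> b \<Longrightarrow> a \<noteq> c \<Longrightarrow> b \<noteq> c \<Longrightarrow> bad W"
  unfolding bad_def by blast

lemma cmp_nbhd: "u \<in> cmp_V t ns \<Longrightarrow> nbhd (cmp_E t ns) u = {z \<in> cmp_V t ns. fst z \<noteq> fst u}"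
  unfolding nbhd_def cmp_E_def by auto

lemma bad_step:
  assumes "bad (cmp_V t ns - B)" "skew_step (cmp_V t ns) (cmp_E t ns) B B'"
  shows "bad (cmp_V t ns - B')"
proof -
  let ?V = "cmp_V t ns"
  obtain x w where x: "x \<in> ?V" and w: "w \<in> ?V - B" and nb: "nbhd (cmp_E t ns) x \<inter> (?V - B) = {w}"
    and B': "B' = insert w B"
    using assms(2) unfolding skew_step_def by blast
  let ?W = "?V - B"
  have W': "?V - B' = ?W - {w}" using B' by auto
  have key: "\<And>z. z \<in> ?W \<Longrightarrow> fst z \<noteq> fst x \<Longrightarrow> z = w"
  proof -
    fix z assume "z \<in> ?W" "fst z \<noteq> fst x"
    then have "z \<in> nbhd (cmp_E t ns) x \<inter> ?W" using cmp_nbhd[OF x] by auto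
    then show "z = w" using nb by auto
  qed
  have wx: "fst w \<noteq> fst x"
  proof -
    have "w \<in> nbhd (cmp_E t ns) x" using nb by auto
    then show ?thesis using cmp_nbhd[OF x] by auto
  qed
  show ?thesis
  proof (cases "\<exists>a\<in>?W. \<exists>b\<in>?W. \<exists>c\<in>?W. a \<noteq> b \<and> a \<noteq> c \<and> b \<noteq> c")
    case True
    then obtain a b c where abc: "a \<in> ?W" "b \<in> ?W" "c \<in> ?W" "a \<noteq> b" "a \<noteq> c" "b \<noteq> c" by blast
    have "\<exists>p\<in>?W - {w}. \<exists>q\<in>?W - {w}. p \<noteq> q \<and> fst p = fst q"
    proof (cases "a = w")
      case True
      then have "b \<noteq> w" "c \<noteq> w" using abc by auto
      then have "fst b = fst x" "fst c = fst x" using key[of b] key[of c] abc by blast+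
      moreover have "b \<in> ?W - {w}" "c \<in> ?W - {w}" using abc \<open>b \<noteq> w\<close> \<open>c \<noteq> w\<close> by auto
      ultimately show ?thesis using abc(6) by metis
    next
      case False
      then have fa: "fst a = fst x" using key[of a] abc by blast
      show ?thesis
      proof (cases "b = w")
        case True
        then have "c \<noteq> w" using abc by auto
        then have "fst c = fst x" using key[of c] abc by blast
        moreover have "a \<in> ?W - {w}" "c \<in> ?W - {w}" using abc \<open>c \<noteq> w\<close> False by auto
        ultimately show ?thesis using abc(5) fa by metis
      next
        case False
        then have "fst b = fst x" using key[of b] abc by blast
        moreover have "a \<in> ?W - {w}" "b \<in> ?W - {w}" using abc \<open>b \<noteq> w\<close> \<open>a \<noteq> w\<close> by auto
        ultimately show ?thesis using abc(4) fa by metis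
      qed
    qed
    then obtain p q where "p \<in> ?W - {w}" "q \<in> ?W - {w}" "p \<noteq> q" "fst p = fst q" by blast
    then show ?thesis unfolding W' by (rule bad_intro2)
  next
    case False
    then obtain a b where ab: "a \<in> ?W" "b \<in> ?W" "a \<noteq> b" "fst a = fst b"
      using assms(1) unfolding bad_def by blast
    have "a \<noteq> w"
    proof
      assume "a = w"
      then have "fst b \<noteq> fst x" using ab wx by auto
      then have "b = w" using key[of b] ab by blast
      then show False using ab \<open>a = w\<close> by auto
    qed
    moreover have "b \<noteq> w"
    proof
      assume "b = w"
      then have "fst a \<noteq> fst x" using ab wx by auto
      then have "a = w" using key[of a] ab by blast
      then show False using ab \<open>b = w\<close> by auto
    qed
    ultimately have "a \<in> ?W - {w}" "b \<in> ?W - {w}" using ab by auto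
    then show ?thesis unfolding W' using ab(3,4) by (rule bad_intro2)
  qed
qed

lemma forcing_not_bad:
  assumes "(skew_step (cmp_V t ns) (cmp_E t ns))\<^sup>*\<^sup>* B (cmp_V t ns)"
  shows "\<not> bad (cmp_V t ns - B)"
  using assms
proof (induction rule: converse_rtranclp_induct)
  case base
  then show ?case unfolding bad_def by simp
next
  case (step B B')
  show ?case
  proof
    assume "bad (cmp_V t ns - B)"
    from bad_step[OF this step(1)] step(3) show False by simp
  qed
qed

lemma not_bad_adm:
  assumes "\<not> bad A" "A \<subseteq> V"
  shows "adm V A"
proof (cases "A = {}")
  case True then show ?thesis unfolding adm_def using assms by simp
next
  case False
  then obtain a where a: "a \<in> A" by blast
  show ?thesis
  proof (cases "A = {a}")
    case True then show ?thesis unfolding adm_def using assms a by auto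
  next
    case False
    then obtain b where b: "b \<in> A" "b \<noteq> a" using a by blast
    have "A = {a, b}"
    proof (rule ccontr)
      assume "A \<noteq> {a, b}"
      then have "\<not> A \<subseteq> {a, b}" using a b by auto
      then obtain c where "c \<in> A" "c \<noteq> a" "c \<noteq> b" by auto
      then have "bad A" using a b by (intro bad_intro3[of a A b c]) auto
      then show False using assms(1) by simp
    qed
    moreover have "fst a \<noteq> fst b"
    proof
      assume "fst a = fst b"
      then have "bad A" using a b by (intro bad_intro2[of a A b]) auto
      then show False using assms(1) by simp
    qed
    moreover have "a \<in> V" "b \<in> V" using a b assms(2) by auto
    ultimately have "\<exists>u\<in>V. \<exists>v\<in>V. fst u \<noteq> fst v \<and> A = {u, v}" by blast
    then show ?thesis unfolding adm_def using assms(2) by blast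
  qed
qed

lemma cmp_has_nbr:
  assumes "t \<ge> 2" "\<forall>i<t. ns i \<ge> 1" "y \<in> cmp_V t ns"
  shows "\<exists>x\<in>cmp_V t ns. cmp_E t ns x y"
proof -
  define i where "i = (if fst y = 0 then 1 else (0::nat))"
  have "i < t" "i \<noteq> fst y" unfolding i_def using assms by auto
  then have "(i, 0) \<in> cmp_V t ns" using assms unfolding cmp_V_def by fastforce
  then show ?thesis using \<open>i \<noteq> fst y\<close> assms(3) unfolding cmp_E_def by force
qed

lemma cmp_forcing_iff:
  assumes "t \<ge> 2" "\<forall>i<t. ns i \<ge> 1"
  shows "skew_forcing_set (cmp_V t ns) (cmp_E t ns) S \<longleftrightarrow>
     S \<subseteq> cmp_V t ns \<and> adm (cmp_V t ns) (cmp_V t ns - S)"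
proof
  assume "skew_forcing_set (cmp_V t ns) (cmp_E t ns) S"
  then show "S \<subseteq> cmp_V t ns \<and> adm (cmp_V t ns) (cmp_V t ns - S)"
    unfolding skew_forcing_set_def using forcing_not_bad not_bad_adm by blast
next
  let ?V = "cmp_V t ns" and ?E = "cmp_E t ns"
  assume h: "S \<subseteq> ?V \<and> adm ?V (?V - S)"
  then have SV: "S = ?V - (?V - S)" by blast
  have "?V - S = {} \<or> (\<exists>y\<in>?V. ?V - S = {y}) \<or> (\<exists>u\<in>?V. \<exists>v\<in>?V. fst u \<noteq> fst v \<and> ?V - S = {u, v})"
    using h unfolding adm_def by blast
  moreover
  { assume "?V - S = {}"
    then have "S = ?V" using h by blast
    then have "skew_forcing_set ?V ?E S" using forcing_top by simp }
  moreover
  { fix y assume y: "y \<in> ?V" "?V - S = {y}"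
    then have "S = ?V - {y}" using SV by simp
    moreover obtain x where "x \<in> ?V" "?E x y" using cmp_has_nbr[OF assms y(1)] by blast
    ultimately have "skew_forcing_set ?V ?E S" using forcing_single y by metis }
  moreover
  { fix u v assume uv: "u \<in> ?V" "v \<in> ?V" "fst u \<noteq> fst v" "?V - S = {u, v}"
    then have "S = ?V - {u, v}" using SV by simp
    moreover have "?E v u" "\<not> ?E v v" using uv unfolding cmp_E_def by auto
    moreover obtain x where "x \<in> ?V" "?E x v" using cmp_has_nbr[OF assms uv(2)] by blast
    moreover have "u \<noteq> v" using uv by auto
    ultimately have "skew_forcing_set ?V ?E S" using forcing_pair[of u ?V v v ?E x] uv by blast }
  ultimately show "skew_forcing_set ?V ?E S" by blast
qed



lemma adj_cases:
  assumes "A \<subseteq> V" "T \<subseteq> V" "TAR_adj (V - A) T"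
  shows "\<exists>s\<in>V. (s \<in> A \<and> T = V - (A - {s})) \<or> (s \<notin> A \<and> T = V - insert s A)"
proof -
  have TT: "T = V - (V - T)" using assms(2) by blast
  have "TAR_adj (V - A) (V - (V - T))" using assms(3) TT by simp
  then have "card ((A - (V - T)) \<union> ((V - T) - A)) = 1" using adj_compl[OF assms(1), of "V - T"] by simp
  then obtain s where s: "(s \<in> A \<and> V - T = A - {s}) \<or> (s \<notin> A \<and> V - T = insert s A)"
    using symdiff1 by metis
  show ?thesis
  proof (cases "s \<in> A \<and> V - T = A - {s}")
    case True
    then have "s \<in> V" "T = V - (A - {s})" using assms(1) TT by auto
    then show ?thesis using True by blast
  next
    case False
    then have h: "s \<notin> A \<and> V - T = insert s A" using s by blast
    then have "s \<in> V" "T = V - insert s A" using TT by auto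
    then show ?thesis using h by blast
  qed
qed

lemma adj_minus: "A \<subseteq> V \<Longrightarrow> s \<in> A \<Longrightarrow> TAR_adj (V - A) (V - (A - {s}))"
  using adj_compl[of A V "A - {s}"] symdiff1[of A "A - {s}"] by auto

lemma adj_insert: "A \<subseteq> V \<Longrightarrow> s \<in> V \<Longrightarrow> s \<notin> A \<Longrightarrow> TAR_adj (V - A) (V - insert s A)"
  using adj_compl[of A V "insert s A"] symdiff1[of A "insert s A"] by auto

lemma TAR_fin: "finite V \<Longrightarrow> finite (skew_TAR_vertices V E)"
proof -
  assume "finite V"
  moreover have "skew_TAR_vertices V E \<subseteq> Pow V"
    unfolding skew_TAR_vertices_def skew_forcing_set_def by auto
  ultimately show ?thesis using finite_subset by blast
qed

lemma deg_le_gen: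
  assumes "finite V" "S \<subseteq> V"
  shows "skew_TAR_degree V E S \<le> card V"
proof -
  have "{T \<in> skew_TAR_vertices V E. TAR_adj S T} \<subseteq> (\<lambda>s. (S - {s}) \<union> ({s} - S)) ` V"
  proof
    fix T assume T: "T \<in> {T \<in> skew_TAR_vertices V E. TAR_adj S T}"
    then have TV: "T \<subseteq> V" unfolding skew_TAR_vertices_def skew_forcing_set_def by auto
    have SS: "S = V - (V - S)" using assms(2) by blast
    have "TAR_adj (V - (V - S)) T" using T SS by simp
    then obtain s where "s \<in> V" "(s \<in> V - S \<and> T = V - ((V - S) - {s})) \<or> (s \<notin> V - S \<and> T = V - insert s (V - S))"
      using adj_cases[of "V - S" V T] TV by blast
    then have "s \<in> V" "T = (S - {s}) \<union> ({s} - S)" using assms(2) by auto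
    then show "T \<in> (\<lambda>s. (S - {s}) \<union> ({s} - S)) ` V" by blast
  qed
  then have "card {T \<in> skew_TAR_vertices V E. TAR_adj S T} \<le> card ((\<lambda>s. (S - {s}) \<union> ({s} - S)) ` V)"
    using assms(1) by (intro card_mono) auto
  also have "\<dots> \<le> card V" using card_image_le assms(1) by blast
  finally show ?thesis unfolding skew_TAR_degree_def .
qed

lemma deg_top_gen:
  assumes "finite V" "\<forall>z\<in>V. skew_forcing_set V E (V - {z})"
  shows "skew_TAR_degree V E V = card V"
proof -
  have "{T \<in> skew_TAR_vertices V E. TAR_adj V T} = (\<lambda>z. V - {z}) ` V"
  proof (intro equalityI subsetI)
    fix T assume T: "T \<in> {T \<in> skew_TAR_vertices V E. TAR_adj V T}"
    then have TV: "T \<subseteq> V" unfolding skew_TAR_vertices_def skew_forcing_set_def by auto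
    have "TAR_adj (V - {}) T" using T by simp
    then obtain s where "s \<in> V" "(s \<in> {} \<and> T = V - ({} - {s})) \<or> (s \<notin> {} \<and> T = V - insert s {})"
      using adj_cases[of "{}" V T] TV by blast
    then show "T \<in> (\<lambda>z. V - {z}) ` V" by auto
  next
    fix T assume "T \<in> (\<lambda>z. V - {z}) ` V"
    then obtain z where z: "z \<in> V" "T = V - {z}" by blast
    have "TAR_adj (V - {}) (V - insert z {})" using adj_insert[of "{}" V z] z by simp
    then show "T \<in> {T \<in> skew_TAR_vertices V E. TAR_adj V T}"
      using z assms(2) unfolding skew_TAR_vertices_def by simp
  qed
  moreover have "inj_on (\<lambda>z. V - {z}) V" by (rule inj_onI) auto
  ultimately show ?thesis unfolding skew_TAR_degree_def using card_image by metis
qed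

lemma adm_card: "adm V A \<Longrightarrow> finite A \<and> card A \<le> 2"
  unfolding adm_def by (auto simp: card_insert_if)

lemma adm_pair: "a \<noteq> b \<Longrightarrow> adm V {a, b} \<longleftrightarrow> a \<in> V \<and> b \<in> V \<and> fst a \<noteq> fst b"
  unfolding adm_def by (auto simp: doubleton_eq_iff)

lemma adm_single: "adm V {a} \<longleftrightarrow> a \<in> V"
  unfolding adm_def by auto

lemma adm_empty: "adm V {}"
  unfolding adm_def by auto

lemma cmp_V_fin: "finite (cmp_V t ns)"
proof -
  have "cmp_V t ns = Sigma {..<t} (\<lambda>i. {..<ns i})" unfolding cmp_V_def by auto
  then show ?thesis by simp
qed

lemma cmp_V_card: "card (cmp_V t ns) = (\<Sum>i<t. ns i)"
proof -
  have "cmp_V t ns = Sigma {..<t} (\<lambda>i. {..<ns i})" unfolding cmp_V_def by auto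
  then show ?thesis by (simp add: card_SigmaI)
qed

lemma cmp_part_card: "i < t \<Longrightarrow> card {w \<in> cmp_V t ns. fst w = i} = ns i"
proof -
  assume "i < t"
  then have "{w \<in> cmp_V t ns. fst w = i} = (\<lambda>j. (i, j)) ` {..<ns i}" unfolding cmp_V_def by auto
  moreover have "inj_on (\<lambda>j. (i, j)) {..<ns i}" by (rule inj_onI) auto
  ultimately show ?thesis using card_image by fastforce
qed



lemma F_char:
  assumes "t \<ge> 2" "\<forall>i<t. ns i \<ge> 1"
  shows "T \<in> skew_TAR_vertices (cmp_V t ns) (cmp_E t ns) \<longleftrightarrow>
    T \<subseteq> cmp_V t ns \<and> adm (cmp_V t ns) (cmp_V t ns - T)"
  unfolding skew_TAR_vertices_def using cmp_forcing_iff[OF assms] by simp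

lemma F_compl:
  assumes "t \<ge> 2" "\<forall>i<t. ns i \<ge> 1" "A \<subseteq> cmp_V t ns"
  shows "cmp_V t ns - A \<in> skew_TAR_vertices (cmp_V t ns) (cmp_E t ns) \<longleftrightarrow> adm (cmp_V t ns) A"
proof -
  have "cmp_V t ns - (cmp_V t ns - A) = A" using assms(3) by blast
  then show ?thesis using F_char[OF assms(1,2)] by auto
qed

lemma F_forms:
  assumes "t \<ge> 2" "\<forall>i<t. ns i \<ge> 1" "T \<in> skew_TAR_vertices (cmp_V t ns) (cmp_E t ns)"
  shows "T = cmp_V t ns \<or> (\<exists>y\<in>cmp_V t ns. T = cmp_V t ns - {y}) \<or>
     (\<exists>u\<in>cmp_V t ns. \<exists>v\<in>cmp_V t ns. fst u \<noteq> fst v \<and> T = cmp_V t ns - {u, v})"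
proof -
  let ?V = "cmp_V t ns"
  have h: "T \<subseteq> ?V" "adm ?V (?V - T)" using F_char[OF assms(1,2)] assms(3) by auto
  have TT: "T = ?V - (?V - T)" using h by blast
  have "?V - T = {} \<or> (\<exists>y\<in>?V. ?V - T = {y}) \<or> (\<exists>u\<in>?V. \<exists>v\<in>?V. fst u \<noteq> fst v \<and> ?V - T = {u, v})"
    using h(2) unfolding adm_def by blast
  then show ?thesis
  proof (elim disjE)
    assume "?V - T = {}" then show ?thesis using h by blast
  next
    assume "\<exists>y\<in>?V. ?V - T = {y}" then show ?thesis using TT by metis
  next
    assume "\<exists>u\<in>?V. \<exists>v\<in>?V. fst u \<noteq> fst v \<and> ?V - T = {u, v}" then show ?thesis using TT by metis
  qed
qed

lemma deg_pair:
  assumes "t \<ge> 2" "\<forall>i<t. ns i \<ge> 1" "u \<in> cmp_V t ns" "v \<in> cmp_V t ns" "fst u \<noteq> fst v"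
  shows "skew_TAR_degree (cmp_V t ns) (cmp_E t ns) (cmp_V t ns - {u, v}) = 2"
proof -
  let ?V = "cmp_V t ns" and ?E = "cmp_E t ns"
  let ?F = "skew_TAR_vertices ?V ?E"
  have uv: "u \<noteq> v" using assms(5) by auto
  have "{T \<in> ?F. TAR_adj (?V - {u, v}) T} = {?V - {u}, ?V - {v}}"
  proof (intro equalityI subsetI)
    fix T assume T: "T \<in> {T \<in> ?F. TAR_adj (?V - {u, v}) T}"
    then have h: "T \<subseteq> ?V" "adm ?V (?V - T)" using F_char[OF assms(1,2)] by auto
    obtain s where s: "s \<in> ?V" "(s \<in> {u, v} \<and> T = ?V - ({u, v} - {s})) \<or> (s \<notin> {u, v} \<and> T = ?V - insert s {u, v})"
      using adj_cases[of "{u, v}" ?V T] T h(1) assms(3,4) by blast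
    show "T \<in> {?V - {u}, ?V - {v}}"
    proof (cases "s \<in> {u, v}")
      case True
      then have "T = ?V - ({u, v} - {s})" using s by blast
      then show ?thesis using True uv by auto
    next
      case False
      then have T2: "T = ?V - insert s {u, v}" using s by blast
      have "?V - T = insert s {u, v}" using T2 s(1) assms(3,4) by auto
      then have "card (insert s {u, v}) \<le> 2" using adm_card[OF h(2)] by simp
      then show ?thesis using False uv by simp
    qed
  next
    fix T assume "T \<in> {?V - {u}, ?V - {v}}"
    then have "T = ?V - ({u, v} - {v}) \<or> T = ?V - ({u, v} - {u})" using uv by auto
    moreover have "TAR_adj (?V - {u, v}) (?V - ({u, v} - {v}))" "TAR_adj (?V - {u, v}) (?V - ({u, v} - {u}))"
      using adj_minus[of "{u, v}" ?V v] adj_minus[of "{u, v}" ?V u] assms(3,4) by auto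
    moreover have "?V - {u} \<in> ?F" "?V - {v} \<in> ?F"
      using F_compl[OF assms(1,2)] adm_single assms(3,4) by auto
    moreover have "?V - ({u, v} - {v}) = ?V - {u}" "?V - ({u, v} - {u}) = ?V - {v}" using uv by auto
    ultimately show "T \<in> {T \<in> ?F. TAR_adj (?V - {u, v}) T}" by auto
  qed
  moreover have "?V - {u} \<noteq> ?V - {v}" using assms(3,4) uv by auto
  ultimately show ?thesis unfolding skew_TAR_degree_def by simp
qed

lemma deg_single:
  assumes "t \<ge> 2" "\<forall>i<t. ns i \<ge> 1" "y \<in> cmp_V t ns"
  shows "skew_TAR_degree (cmp_V t ns) (cmp_E t ns) (cmp_V t ns - {y}) = (\<Sum>i<t. ns i) - ns (fst y) + 1"
proof -
  let ?V = "cmp_V t ns" and ?E = "cmp_E t ns"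
  let ?F = "skew_TAR_vertices ?V ?E"
  let ?Z = "{z \<in> ?V. fst z \<noteq> fst y}"
  have "{T \<in> ?F. TAR_adj (?V - {y}) T} = insert ?V ((\<lambda>z. ?V - {y, z}) ` ?Z)"
  proof (intro equalityI subsetI)
    fix T assume T: "T \<in> {T \<in> ?F. TAR_adj (?V - {y}) T}"
    then have h: "T \<subseteq> ?V" "adm ?V (?V - T)" using F_char[OF assms(1,2)] by auto
    obtain s where s: "s \<in> ?V" "(s \<in> {y} \<and> T = ?V - ({y} - {s})) \<or> (s \<notin> {y} \<and> T = ?V - insert s {y})"
      using adj_cases[of "{y}" ?V T] T h(1) assms(3) by blast
    show "T \<in> insert ?V ((\<lambda>z. ?V - {y, z}) ` ?Z)"
    proof (cases "s = y")
      case True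
      then have "T = ?V" using s by auto
      then show ?thesis by simp
    next
      case False
      then have T2: "T = ?V - {y, s}" using s by auto
      have "?V - T = {s, y}" using T2 s(1) assms(3) by auto
      then have "fst s \<noteq> fst y" using h(2) adm_pair[of s y ?V] False by auto
      then show ?thesis using T2 s(1) by blast
    qed
  next
    fix T assume T: "T \<in> insert ?V ((\<lambda>z. ?V - {y, z}) ` ?Z)"
    show "T \<in> {T \<in> ?F. TAR_adj (?V - {y}) T}"
    proof (cases "T = ?V")
      case True
      have "TAR_adj (?V - {y}) (?V - ({y} - {y}))" using adj_minus[of "{y}" ?V y] assms(3) by simp
      moreover have "?V \<in> ?F" using F_compl[OF assms(1,2), of "{}"] adm_empty by simp
      ultimately show ?thesis using True by simp
    next
      case False
      then obtain z where z: "z \<in> ?V" "fst z \<noteq> fst y" "T = ?V - {y, z}" using T by blast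
      have zy: "z \<noteq> y" using z by auto
      have "TAR_adj (?V - {y}) (?V - insert z {y})" using adj_insert[of "{y}" ?V z] assms(3) z zy by simp
      moreover have "insert z {y} = {y, z}" by auto
      moreover have "?V - {y, z} \<in> ?F" using F_compl[OF assms(1,2), of "{y, z}"] adm_pair[of y z ?V] z zy assms(3) by auto
      ultimately show ?thesis using z by simp
    qed
  qed
  moreover have "?V \<notin> (\<lambda>z. ?V - {y, z}) ` ?Z" by auto
  moreover have "inj_on (\<lambda>z. ?V - {y, z}) ?Z"
  proof (rule inj_onI)
    fix a b assume ab: "a \<in> ?Z" "b \<in> ?Z" "?V - {y, a} = ?V - {y, b}"
    then have "a \<noteq> y" "b \<noteq> y" "a \<in> ?V" by auto
    moreover have "a \<notin> ?V - {y, b}" using ab(3) by (metis insertCI DiffD2)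
    ultimately show "a = b" by blast
  qed
  moreover have "finite ?Z" using cmp_V_fin by simp
  ultimately have "skew_TAR_degree ?V ?E (?V - {y}) = card ?Z + 1"
    unfolding skew_TAR_degree_def by (simp add: card_image)
  moreover have "?Z = ?V - {z \<in> ?V. fst z = fst y}" by auto
  moreover have "card {z \<in> ?V. fst z = fst y} = ns (fst y)"
  proof -
    have "fst y < t" using assms(3) unfolding cmp_V_def by auto
    then show ?thesis using cmp_part_card by blast
  qed
  moreover have "card (?V - {z \<in> ?V. fst z = fst y}) = card ?V - card {z \<in> ?V. fst z = fst y}"
    using cmp_V_fin by (intro card_Diff_subset) auto
  ultimately show ?thesis using cmp_V_card by simp
qed

lemma deg_top_cmp:
  assumes "t \<ge> 2" "\<forall>i<t. ns i \<ge> 1"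
  shows "skew_TAR_degree (cmp_V t ns) (cmp_E t ns) (cmp_V t ns) = (\<Sum>i<t. ns i)"
proof -
  have "\<forall>z\<in>cmp_V t ns. skew_forcing_set (cmp_V t ns) (cmp_E t ns) (cmp_V t ns - {z})"
    using cmp_has_nbr[OF assms] forcing_single by metis
  then show ?thesis using deg_top_gen cmp_V_fin cmp_V_card by metis
qed



lemma cmp_n_ge2:
  assumes "t \<ge> 2" "\<forall>i<t. ns i \<ge> 1"
  shows "(0, 0) \<in> cmp_V t ns" "(1, 0) \<in> cmp_V t ns" "card (cmp_V t ns) \<ge> 2"
proof -
  have "ns 0 \<ge> 1" "ns 1 \<ge> 1" using assms by auto
  then show a: "(0, 0) \<in> cmp_V t ns" "(1, 0) \<in> cmp_V t ns" using assms(1) unfolding cmp_V_def by auto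
  have "card {(0::nat, 0::nat), (1, 0)} \<le> card (cmp_V t ns)"
    using a cmp_V_fin by (intro card_mono) auto
  then show "card (cmp_V t ns) \<ge> 2" by simp
qed

lemma part1:
  assumes "t \<ge> 2" "\<forall>i<t. ns i \<ge> 1"
  shows "minimal_skew_forcing_set (cmp_V t ns) (cmp_E t ns) S \<longleftrightarrow>
     (\<exists>u\<in>cmp_V t ns. \<exists>v\<in>cmp_V t ns. fst u \<noteq> fst v \<and> S = cmp_V t ns - {u, v})"
proof -
  let ?V = "cmp_V t ns" and ?E = "cmp_E t ns"
  let ?F = "skew_TAR_vertices ?V ?E"
  have Fd: "\<And>T. skew_forcing_set ?V ?E T \<longleftrightarrow> T \<in> ?F" unfolding skew_TAR_vertices_def by simp
  show ?thesis
  proof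
    assume m: "minimal_skew_forcing_set ?V ?E S"
    then have SF: "S \<in> ?F" unfolding minimal_skew_forcing_set_def Fd by simp
    have nomin: "\<And>T. T \<subset> S \<Longrightarrow> T \<notin> ?F" using m unfolding minimal_skew_forcing_set_def Fd by blast
    have "\<not> (S = ?V \<or> (\<exists>y\<in>?V. S = ?V - {y}))"
    proof
      assume h: "S = ?V \<or> (\<exists>y\<in>?V. S = ?V - {y})"
      obtain y where y: "y \<in> ?V" "S = ?V \<or> S = ?V - {y}"
        using h cmp_n_ge2(1)[OF assms] by blast
      obtain x where x: "x \<in> ?V" "?E x y" using cmp_has_nbr[OF assms y(1)] by blast
      have xy: "fst y \<noteq> fst x" "x \<noteq> y" using x unfolding cmp_E_def by auto
      have "?V - {y, x} \<in> ?F" using F_compl[OF assms, of "{y, x}"] adm_pair[of y x ?V] xy x y by auto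
      moreover have "?V - {y, x} \<subset> S" using y x xy by auto
      ultimately show False using nomin by blast
    qed
    then show "\<exists>u\<in>?V. \<exists>v\<in>?V. fst u \<noteq> fst v \<and> S = ?V - {u, v}"
      using F_forms[OF assms SF] by blast
  next
    assume "\<exists>u\<in>?V. \<exists>v\<in>?V. fst u \<noteq> fst v \<and> S = ?V - {u, v}"
    then obtain u v where uv: "u \<in> ?V" "v \<in> ?V" "fst u \<noteq> fst v" "S = ?V - {u, v}" by blast
    have uv2: "u \<noteq> v" using uv by auto
    have SF: "S \<in> ?F" using F_compl[OF assms, of "{u, v}"] adm_pair[OF uv2] uv by auto
    have "\<forall>T. T \<subset> S \<longrightarrow> T \<notin> ?F"
    proof (intro allI impI)
      fix T assume TS: "T \<subset> S"
      show "T \<notin> ?F"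
      proof
        assume TF: "T \<in> ?F"
        have "T = ?V \<or> (\<exists>y\<in>?V. T = ?V - {y}) \<or>
            (\<exists>a\<in>?V. \<exists>b\<in>?V. fst a \<noteq> fst b \<and> T = ?V - {a, b})" using F_forms[OF assms TF] .
        then show False
        proof (elim disjE)
          assume "T = ?V" then show False using TS uv by auto
        next
          assume "\<exists>y\<in>?V. T = ?V - {y}"
          then obtain y where "y \<in> ?V" "T = ?V - {y}" by blast
          then have "u = y" "v = y" using TS uv by auto
          then show False using uv2 by simp
        next
          assume "\<exists>a\<in>?V. \<exists>b\<in>?V. fst a \<noteq> fst b \<and> T = ?V - {a, b}"
          then obtain a b where ab: "a \<in> ?V" "b \<in> ?V" "T = ?V - {a, b}" by blast
          then have "u \<in> {a, b}" "v \<in> {a, b}" using TS uv by auto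
          then have "{a, b} = {u, v}" using uv2 by auto
          then show False using TS ab uv by auto
        qed
      qed
    qed
    then show "minimal_skew_forcing_set ?V ?E S"
      unfolding minimal_skew_forcing_set_def Fd using SF by blast
  qed
qed

lemma part2:
  assumes "t \<ge> 2" "\<forall>i<t. ns i \<ge> 1"
  shows "(S \<in> skew_TAR_vertices (cmp_V t ns) (cmp_E t ns) \<and> card S = (\<Sum>i<t. ns i) - 2) \<longleftrightarrow>
     (\<exists>u\<in>cmp_V t ns. \<exists>v\<in>cmp_V t ns. fst u \<noteq> fst v \<and> S = cmp_V t ns - {u, v})"
proof -
  let ?V = "cmp_V t ns" and ?E = "cmp_E t ns"
  let ?F = "skew_TAR_vertices ?V ?E"
  have n: "card ?V = (\<Sum>i<t. ns i)" "card ?V \<ge> 2" using cmp_V_card cmp_n_ge2[OF assms] by auto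
  have c2: "\<And>u v. u \<in> ?V \<Longrightarrow> v \<in> ?V \<Longrightarrow> u \<noteq> v \<Longrightarrow> card (?V - {u, v}) = card ?V - 2"
    using cmp_V_fin by (subst card_Diff_subset) auto
  have c1: "\<And>y. y \<in> ?V \<Longrightarrow> card (?V - {y}) = card ?V - 1"
    using cmp_V_fin by simp
  show ?thesis
  proof
    assume h: "S \<in> ?F \<and> card S = (\<Sum>i<t. ns i) - 2"
    have "\<not> (S = ?V \<or> (\<exists>y\<in>?V. S = ?V - {y}))"
    proof
      assume "S = ?V \<or> (\<exists>y\<in>?V. S = ?V - {y})"
      then show False using h n c1 by auto
    qed
    then show "\<exists>u\<in>?V. \<exists>v\<in>?V. fst u \<noteq> fst v \<and> S = ?V - {u, v}"
      using F_forms[OF assms, of S] h by blast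
  next
    assume "\<exists>u\<in>?V. \<exists>v\<in>?V. fst u \<noteq> fst v \<and> S = ?V - {u, v}"
    then obtain u v where uv: "u \<in> ?V" "v \<in> ?V" "fst u \<noteq> fst v" "S = ?V - {u, v}" by blast
    have uv2: "u \<noteq> v" using uv by auto
    have SF: "S \<in> ?F" using F_compl[OF assms, of "{u, v}"] adm_pair[OF uv2] uv by auto
    then show "S \<in> ?F \<and> card S = (\<Sum>i<t. ns i) - 2" using c2[OF uv(1,2) uv2] uv n by simp
  qed
qed



lemma iso_nbr_card:
  assumes "bij_betw \<phi> A B" "\<forall>x\<in>A. \<forall>y\<in>A. R x y \<longleftrightarrow> R' (\<phi> x) (\<phi> y)" "S \<in> A"
  shows "card {T \<in> B. R' (\<phi> S) T} = card {T \<in> A. R S T}"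
proof -
  have "{T \<in> B. R' (\<phi> S) T} = \<phi> ` {T \<in> A. R S T}"
  proof (intro equalityI subsetI)
    fix T assume T: "T \<in> {T \<in> B. R' (\<phi> S) T}"
    then obtain T0 where "T0 \<in> A" "T = \<phi> T0" using assms(1) unfolding bij_betw_def by auto
    then show "T \<in> \<phi> ` {T \<in> A. R S T}" using T assms(2,3) by auto
  next
    fix T assume "T \<in> \<phi> ` {T \<in> A. R S T}"
    then show "T \<in> {T \<in> B. R' (\<phi> S) T}" using assms unfolding bij_betw_def by auto
  qed
  moreover have "inj_on \<phi> A" using assms(1) unfolding bij_betw_def by blast
  then have "inj_on \<phi> {T \<in> A. R S T}" by (rule inj_on_subset) auto
  ultimately show ?thesis by (simp add: card_image)
qed

lemma iso_deg:
  assumes "bij_betw \<phi> (skew_TAR_vertices V' E') (skew_TAR_vertices V E)"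
    "\<forall>x\<in>skew_TAR_vertices V' E'. \<forall>y\<in>skew_TAR_vertices V' E'. TAR_adj x y \<longleftrightarrow> TAR_adj (\<phi> x) (\<phi> y)"
    "S \<in> skew_TAR_vertices V' E'"
  shows "skew_TAR_degree V E (\<phi> S) = skew_TAR_degree V' E' S"
  unfolding skew_TAR_degree_def using iso_nbr_card[OF assms] .

lemma three_elems:
  assumes "finite X" "card X \<ge> 3"
  shows "\<exists>a b c. a \<in> X \<and> b \<in> X \<and> c \<in> X \<and> a \<noteq> b \<and> a \<noteq> c \<and> b \<noteq> c"
proof -
  obtain a where a: "a \<in> X" using assms by fastforce
  have "card (X - {a}) \<ge> 2" using assms a by simp
  then have "X - {a} \<noteq> {}" by (intro notI) simp
  then obtain b where b: "b \<in> X - {a}" by blast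
  have "card (X - {a} - {b}) \<ge> 1" using assms a b by simp
  then have "X - {a} - {b} \<noteq> {}" by (intro notI) simp
  then obtain c where c: "c \<in> X - {a} - {b}" by blast
  show ?thesis using a b c by blast
qed

lemma card_ge3:
  assumes "finite X" "P \<in> X" "Q \<in> X" "R \<in> X" "P \<noteq> Q" "P \<noteq> R" "Q \<noteq> R"
  shows "card X \<ge> 3"
proof -
  have "card {P, Q, R} \<le> card X" using assms by (intro card_mono) auto
  then show ?thesis using assms by simp
qed

lemma deg_ge3:
  assumes "finite V" "P \<in> skew_TAR_vertices V E" "Q \<in> skew_TAR_vertices V E" "R \<in> skew_TAR_vertices V E"
    "P \<noteq> Q" "P \<noteq> R" "Q \<noteq> R" "TAR_adj S P" "TAR_adj S Q" "TAR_adj S R"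
  shows "skew_TAR_degree V E S \<ge> 3"
proof -
  have fin: "finite {T \<in> skew_TAR_vertices V E. TAR_adj S T}" using TAR_fin[OF assms(1)] by simp
  have "P \<in> {T \<in> skew_TAR_vertices V E. TAR_adj S T}" "Q \<in> {T \<in> skew_TAR_vertices V E. TAR_adj S T}"
    "R \<in> {T \<in> skew_TAR_vertices V E. TAR_adj S T}" using assms(2,3,4,8,9,10) by simp_all
  then show ?thesis unfolding skew_TAR_degree_def using card_ge3[OF fin _ _ _ assms(5,6,7)] by blast
qed

lemma L_in:
  assumes "finite A" "A \<noteq> {}" "card ((A - {x}) \<union> ({x} - A)) = 1"
  shows "x \<in> A"
proof (rule ccontr)
  assume "x \<notin> A"
  then have "(A - {x}) \<union> ({x} - A) = insert x A" by auto
  then have "card (insert x A) = 1" using assms(3) by simp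
  moreover have "card (insert x A) = Suc (card A)" using assms(1) \<open>x \<notin> A\<close> by simp
  moreover have "card A > 0" using assms(1,2) by auto
  ultimately show False by simp
qed

lemma two_nbrs:
  assumes "finite A" "A \<noteq> {}" "card A \<le> 2" "A \<subseteq> V" "x \<in> V" "y \<in> V" "x \<noteq> y"
    "TAR_adj (V - A) (V - {x})" "TAR_adj (V - A) (V - {y})"
  shows "A = {x, y}"
proof -
  have sx: "{x} \<subseteq> V" and sy: "{y} \<subseteq> V" using assms(5,6) by simp_all
  have i1: "TAR_adj (V - A) (V - {x}) \<longleftrightarrow> card ((A - {x}) \<union> ({x} - A)) = 1"
    by (rule adj_compl[OF assms(4) sx])
  have i2: "TAR_adj (V - A) (V - {y}) \<longleftrightarrow> card ((A - {y}) \<union> ({y} - A)) = 1"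
    by (rule adj_compl[OF assms(4) sy])
  have c1: "card ((A - {x}) \<union> ({x} - A)) = 1" using i1 assms(8) by simp
  have c2: "card ((A - {y}) \<union> ({y} - A)) = 1" using i2 assms(9) by simp
  have "x \<in> A" "y \<in> A" using L_in[OF assms(1,2) c1] L_in[OF assms(1,2) c2] by auto
  then have sub: "{x, y} \<subseteq> A" by simp
  moreover have "card {x, y} = 2" using assms(7) by simp
  then have "card A \<le> card {x, y}" using assms(3) by simp
  then show ?thesis using card_seteq[OF assms(1) sub] by simp
qed

lemma sg_facts:
  assumes "simple_graph V E"
  shows "finite V" "\<And>x y. E x y \<Longrightarrow> x \<in> V" "\<And>x y. E x y \<Longrightarrow> y \<in> V"
    "\<And>x y. E x y \<Longrightarrow> E y x" "\<And>x. \<not> E x x"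
  using assms unfolding simple_graph_def by blast+

lemma sg_single:
  assumes "simple_graph V E" "\<forall>x\<in>V. \<exists>y. E x y" "y \<in> V"
  shows "skew_forcing_set V E (V - {y})"
proof -
  obtain x where "E y x" using assms by blast
  then have "E x y" "x \<in> V" using sg_facts[OF assms(1)] by blast+
  then show ?thesis using forcing_single assms(3) by metis
qed

lemma sg_deg_top:
  assumes "simple_graph V E" "\<forall>x\<in>V. \<exists>y. E x y"
  shows "skew_TAR_degree V E V = card V"
  using deg_top_gen sg_single[OF assms] sg_facts(1)[OF assms(1)] by metis

lemma sg_pair_iff:
  assumes "simple_graph V E" "\<forall>x\<in>V. \<exists>y. E x y" "u \<in> V" "v \<in> V" "u \<noteq> v"
  shows "skew_forcing_set V E (V - {u, v}) \<longleftrightarrow> nbhd E u \<noteq> nbhd E v"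
proof
  assume "skew_forcing_set V E (V - {u, v})"
  then show "nbhd E u \<noteq> nbhd E v" using twins_not_forcing[of E u v V] sg_facts(4)[OF assms(1)] assms by blast
next
  assume ne: "nbhd E u \<noteq> nbhd E v"
  obtain yv where "E v yv" using assms(2,4) by blast
  then have v1: "E yv v" "yv \<in> V" using sg_facts[OF assms(1)] by blast+
  obtain yu where "E u yu" using assms(2,3) by blast
  then have u1: "E yu u" "yu \<in> V" using sg_facts[OF assms(1)] by blast+
  from ne obtain x where "(x \<in> nbhd E u \<and> x \<notin> nbhd E v) \<or> (x \<notin> nbhd E u \<and> x \<in> nbhd E v)" by blast
  then have "(E u x \<and> \<not> E v x) \<or> (\<not> E u x \<and> E v x)" unfolding nbhd_def by simp
  then show "skew_forcing_set V E (V - {u, v})"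
  proof
    assume h: "E u x \<and> \<not> E v x"
    then have "E x u" "\<not> E x v" "x \<in> V" using sg_facts[OF assms(1)] by blast+
    then show ?thesis using forcing_pair[of u V v x E yv] assms v1 by blast
  next
    assume h: "\<not> E u x \<and> E v x"
    then have "E x v" "\<not> E x u" "x \<in> V" using sg_facts[OF assms(1)] by blast+
    then have "skew_forcing_set V E (V - {v, u})" using forcing_pair[of v V u x E yu] assms u1 by blast
    moreover have "{v, u} = {u, v}" by auto
    ultimately show ?thesis by simp
  qed
qed

lemma edge_aux:
  assumes "simple_graph V E" "\<forall>x\<in>V. \<exists>y. E x y"
    "\<forall>S. skew_forcing_set V E S \<longrightarrow> card (V - S) \<le> 2"
    "a \<in> V" "b \<in> V" "a \<noteq> b" "E a x" "\<not> E b x" "\<not> E a b"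
  shows False
proof -
  note sf = sg_facts[OF assms(1)]
  have xa: "E x a" using sf(4)[OF assms(7)] .
  have xV: "x \<in> V" using sf(3)[OF assms(7)] .
  have naa: "\<not> E a a" using sf(5) .
  have xna: "x \<noteq> a" using assms(7) naa by metis
  have xnb: "x \<noteq> b" using assms(7,9) by metis
  have nxb: "\<not> E x b" using assms(8) sf(4) by metis
  obtain z0 where "E b z0" using assms(2,5) by blast
  then have z: "E z0 b" "z0 \<in> V" using sf(4) sf(2) by blast+
  have F: "skew_forcing_set V E (V - {a, b, x})"
    using forcing_triple[OF assms(4,5) xV assms(6) xna xnb assms(7,9) naa nxb xa z(2,1)] .
  have "V - (V - {a, b, x}) = {a, b, x}" using assms(4,5) xV by auto
  moreover have "card {a, b, x} = 3" using assms(6) xna xnb by simp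
  ultimately have "card (V - (V - {a, b, x})) = 3" by simp
  then show False using assms(3) F by fastforce
qed

lemma sg_edge_iff:
  assumes "simple_graph V E" "\<forall>x\<in>V. \<exists>y. E x y" "u \<in> V" "v \<in> V"
    "\<forall>S. skew_forcing_set V E S \<longrightarrow> card (V - S) \<le> 2"
  shows "E u v \<longleftrightarrow> nbhd E u \<noteq> nbhd E v"
proof
  assume "E u v"
  then have "v \<in> nbhd E u" "v \<notin> nbhd E v" using sg_facts(5)[OF assms(1)] unfolding nbhd_def by auto
  then show "nbhd E u \<noteq> nbhd E v" by auto
next
  assume ne: "nbhd E u \<noteq> nbhd E v"
  show "E u v"
  proof (rule ccontr)
    assume nuv: "\<not> E u v"
    then have nvu: "\<not> E v u" using sg_facts(4)[OF assms(1)] by blast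
    have uv: "u \<noteq> v" using ne by auto
    from ne obtain x where "(x \<in> nbhd E u \<and> x \<notin> nbhd E v) \<or> (x \<notin> nbhd E u \<and> x \<in> nbhd E v)" by blast
    then have "(E u x \<and> \<not> E v x) \<or> (E v x \<and> \<not> E u x)" unfolding nbhd_def by auto
    then show False
    proof
      assume "E u x \<and> \<not> E v x"
      then show False using edge_aux[OF assms(1,2,5,3,4) uv _ _ nuv] by blast
    next
      assume "E v x \<and> \<not> E u x"
      then show False using edge_aux[OF assms(1,2,5,4,3) uv[symmetric] _ _ nvu] by blast
    qed
  qed
qed



lemma not_adj_self: "\<not> TAR_adj S S"
  unfolding TAR_adj_def by simp

lemma not_adj_singles:
  assumes "y \<in> V" "z \<in> V"
  shows "\<not> TAR_adj (V - {y}) (V - {z})"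
proof
  assume h: "TAR_adj (V - {y}) (V - {z})"
  have sy: "{y} \<subseteq> V" and sz: "{z} \<subseteq> V" using assms by auto
  have i: "TAR_adj (V - {y}) (V - {z}) \<longleftrightarrow> card (({y} - {z}) \<union> ({z} - {y})) = 1"
    by (rule adj_compl[OF sy sz])
  have c: "card (({y} - {z}) \<union> ({z} - {y})) = 1" using i h by simp
  show False
  proof (cases "y = z")
    case True then show False using c by simp
  next
    case False
    then have "({y} - {z}) \<union> ({z} - {y}) = {y, z}" by auto
    then show False using c False by simp
  qed
qed

lemma adj_minus':
  "A \<subseteq> V \<Longrightarrow> s \<in> A \<Longrightarrow> B = A - {s} \<Longrightarrow> TAR_adj (V - A) (V - B)"
  using adj_minus[of A V s] by simp

lemma FH1:
  assumes "t \<ge> 2" "\<forall>i<t. ns i \<ge> 1" "X \<in> skew_TAR_vertices (cmp_V t ns) (cmp_E t ns)"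
    "skew_TAR_degree (cmp_V t ns) (cmp_E t ns) X \<ge> 3"
  shows "X = cmp_V t ns \<or> (\<exists>y\<in>cmp_V t ns. X = cmp_V t ns - {y})"
proof -
  have "\<not> (\<exists>u\<in>cmp_V t ns. \<exists>v\<in>cmp_V t ns. fst u \<noteq> fst v \<and> X = cmp_V t ns - {u, v})"
  proof
    assume "\<exists>u\<in>cmp_V t ns. \<exists>v\<in>cmp_V t ns. fst u \<noteq> fst v \<and> X = cmp_V t ns - {u, v}"
    then obtain u v where "u \<in> cmp_V t ns" "v \<in> cmp_V t ns" "fst u \<noteq> fst v" "X = cmp_V t ns - {u, v}" by blast
    then have "skew_TAR_degree (cmp_V t ns) (cmp_E t ns) X = 2" using deg_pair[OF assms(1,2)] by simp
    then show False using assms(4) by simp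
  qed
  then show ?thesis using F_forms[OF assms(1,2,3)] by blast
qed

lemma small_compl:
  assumes tns: "t \<ge> 2" "\<forall>i<t. ns i \<ge> 1"
    and sg: "simple_graph V' E'" "\<forall>x\<in>V'. \<exists>y. E' x y"
    and bij: "bij_betw \<phi> (skew_TAR_vertices V' E') (skew_TAR_vertices (cmp_V t ns) (cmp_E t ns))"
    and adj: "\<forall>x\<in>skew_TAR_vertices V' E'. \<forall>y\<in>skew_TAR_vertices V' E'. TAR_adj x y \<longleftrightarrow> TAR_adj (\<phi> x) (\<phi> y)"
    and S: "skew_forcing_set V' E' S"
  shows "card (V' - S) \<le> 2"
proof (rule ccontr)
  let ?V = "cmp_V t ns" and ?E = "cmp_E t ns"
  let ?F = "skew_TAR_vertices ?V ?E" and ?F' = "skew_TAR_vertices V' E'"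
  assume "\<not> card (V' - S) \<le> 2"
  then have "card (V' - S) \<ge> 3" by simp
  moreover have finV': "finite V'" using sg_facts(1)[OF sg(1)] .
  ultimately obtain a b c where abc: "a \<in> V' - S" "b \<in> V' - S" "c \<in> V' - S" "a \<noteq> b" "a \<noteq> c" "b \<noteq> c"
    using three_elems[of "V' - S"] by auto
  have SV: "S \<subseteq> V'" using S unfolding skew_forcing_set_def by blast
  have abcV: "{a, b, c} \<subseteq> V'" using abc by auto
  have inF: "\<And>T. S \<subseteq> T \<Longrightarrow> T \<subseteq> V' \<Longrightarrow> T \<in> ?F'"
    using forcing_mono[OF S] unfolding skew_TAR_vertices_def by blast
  define T0 where "T0 = V' - {a, b, c}"
  define Tab where "Tab = V' - {a, b}"
  define Tac where "Tac = V' - {a, c}"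
  define Tbc where "Tbc = V' - {b, c}"
  define Ta where "Ta = V' - {a}"
  define Tb where "Tb = V' - {b}"
  define Tc where "Tc = V' - {c}"
  have mem: "T0 \<in> ?F'" "Tab \<in> ?F'" "Tac \<in> ?F'" "Tbc \<in> ?F'" "Ta \<in> ?F'" "Tb \<in> ?F'" "Tc \<in> ?F'" "V' \<in> ?F'"
    unfolding T0_def Tab_def Tac_def Tbc_def Ta_def Tb_def Tc_def using abc SV by (intro inF; blast)+
  have a1: "TAR_adj T0 Tab" unfolding T0_def Tab_def using abc by (intro adj_minus'[OF abcV, of c]) auto
  have a2: "TAR_adj T0 Tac" unfolding T0_def Tac_def using abc by (intro adj_minus'[OF abcV, of b]) auto
  have a3: "TAR_adj T0 Tbc" unfolding T0_def Tbc_def using abc by (intro adj_minus'[OF abcV, of a]) auto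
  have abV: "{a, b} \<subseteq> V'" "{a, c} \<subseteq> V'" "{a} \<subseteq> V'" using abc by auto
  have a4: "TAR_adj Tab Ta" unfolding Tab_def Ta_def using abc by (intro adj_minus'[OF abV(1), of b]) auto
  have a5: "TAR_adj Tab Tb" unfolding Tab_def Tb_def using abc by (intro adj_minus'[OF abV(1), of a]) auto
  have a6: "TAR_adj Tac Ta" unfolding Tac_def Ta_def using abc by (intro adj_minus'[OF abV(2), of c]) auto
  have a7: "TAR_adj Tac Tc" unfolding Tac_def Tc_def using abc by (intro adj_minus'[OF abV(2), of a]) auto
  have a8: "TAR_adj Ta V'" unfolding Ta_def using abc adj_minus'[OF abV(3), of a "{}"] by simp
  have d: "T0 \<noteq> Tab" "T0 \<noteq> Tac" "T0 \<noteq> Tbc" "Tab \<noteq> Tac" "Tab \<noteq> Tbc" "Tac \<noteq> Tbc"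
    "Ta \<noteq> Tb" "Ta \<noteq> Tc" "Tab \<noteq> Ta" "Tab \<noteq> Tb" "Tac \<noteq> Ta" "Tac \<noteq> Tc" "Ta \<noteq> V'" "T0 \<noteq> Ta"
    "Ta \<noteq> T0" "Tb \<noteq> T0" "Tc \<noteq> T0" "V' \<noteq> Tab" "V' \<noteq> Tac"
    unfolding T0_def Tab_def Tac_def Tbc_def Ta_def Tb_def Tc_def using abc by auto
  have s1: "TAR_adj Tab T0" using a1 adj_sym by blast
  have s2: "TAR_adj Tac T0" using a2 adj_sym by blast
  have s8: "TAR_adj Ta V'" "TAR_adj Ta Tab" "TAR_adj Ta Tac" using a8 a4 a6 adj_sym by blast+
  have g1: "skew_TAR_degree V' E' T0 \<ge> 3"
    using deg_ge3[OF finV' mem(2,3,4) d(4,5,6) a1 a2 a3] .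
  have g2: "skew_TAR_degree V' E' Tab \<ge> 3"
    using deg_ge3[OF finV' mem(5,6,1) d(7,15,16) a4 a5 s1] .
  have g3: "skew_TAR_degree V' E' Tac \<ge> 3"
    using deg_ge3[OF finV' mem(5,7,1) d(8,15,17) a6 a7 s2] .
  have g4: "skew_TAR_degree V' E' Ta \<ge> 3"
    using deg_ge3[OF finV' mem(8,2,3) d(18,19,4) s8] .
  let ?X = "\<phi> T0" and ?Y1 = "\<phi> Tab" and ?Y2 = "\<phi> Tac" and ?Z = "\<phi> Ta"
  have inj: "inj_on \<phi> ?F'" using bij unfolding bij_betw_def by blast
  have imF: "\<And>T. T \<in> ?F' \<Longrightarrow> \<phi> T \<in> ?F" using bij unfolding bij_betw_def by blast
  have fX: "?X = ?V \<or> (\<exists>y\<in>?V. ?X = ?V - {y})"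
    using FH1[OF tns imF[OF mem(1)]] g1 iso_deg[OF bij adj mem(1)] by simp
  have fY1: "?Y1 = ?V \<or> (\<exists>y\<in>?V. ?Y1 = ?V - {y})"
    using FH1[OF tns imF[OF mem(2)]] g2 iso_deg[OF bij adj mem(2)] by simp
  have fY2: "?Y2 = ?V \<or> (\<exists>y\<in>?V. ?Y2 = ?V - {y})"
    using FH1[OF tns imF[OF mem(3)]] g3 iso_deg[OF bij adj mem(3)] by simp
  have fZ: "?Z = ?V \<or> (\<exists>y\<in>?V. ?Z = ?V - {y})"
    using FH1[OF tns imF[OF mem(5)]] g4 iso_deg[OF bij adj mem(5)] by simp
  have b1: "TAR_adj ?X ?Y1" using adj mem a1 by blast
  have b2: "TAR_adj ?X ?Y2" using adj mem a2 by blast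
  have b3: "TAR_adj ?Y1 ?Z" using adj mem a4 by blast
  have n12: "?Y1 \<noteq> ?Y2" using inj mem d(4) unfolding inj_on_def by blast
  have nXZ: "?X \<noteq> ?Z" using inj mem d(14) unfolding inj_on_def by blast
  show False
  proof (cases "?X = ?V")
    case True
    then have "?Y1 \<noteq> ?V" using b1 not_adj_self by metis
    then obtain y1 where y1: "y1 \<in> ?V" "?Y1 = ?V - {y1}" using fY1 by blast
    show False
    proof (cases "?Z = ?V")
      case True then show False using nXZ \<open>?X = ?V\<close> by simp
    next
      case False
      then obtain z where "z \<in> ?V" "?Z = ?V - {z}" using fZ by blast
      then show False using b3 y1 not_adj_singles by metis
    qed
  next
    case False
    then obtain y where y: "y \<in> ?V" "?X = ?V - {y}" using fX by blast
    have "?Y1 = ?V"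
    proof (rule ccontr)
      assume "?Y1 \<noteq> ?V"
      then obtain y1 where "y1 \<in> ?V" "?Y1 = ?V - {y1}" using fY1 by blast
      then show False using b1 y not_adj_singles by metis
    qed
    moreover have "?Y2 = ?V"
    proof (rule ccontr)
      assume "?Y2 \<noteq> ?V"
      then obtain y2 where "y2 \<in> ?V" "?Y2 = ?V - {y2}" using fY2 by blast
      then show False using b2 y not_adj_singles by metis
    qed
    ultimately show False using n12 by simp
  qed
qed



lemma m_eq_n:
  assumes tns: "t \<ge> 2" "\<forall>i<t. ns i \<ge> 1"
    and sg: "simple_graph V' E'" "\<forall>x\<in>V'. \<exists>y. E' x y"
    and bij: "bij_betw \<phi> (skew_TAR_vertices V' E') (skew_TAR_vertices (cmp_V t ns) (cmp_E t ns))"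
    and adj: "\<forall>x\<in>skew_TAR_vertices V' E'. \<forall>y\<in>skew_TAR_vertices V' E'. TAR_adj x y \<longleftrightarrow> TAR_adj (\<phi> x) (\<phi> y)"
  shows "card V' = card (cmp_V t ns)"
proof -
  let ?V = "cmp_V t ns" and ?E = "cmp_E t ns"
  let ?F = "skew_TAR_vertices ?V ?E" and ?F' = "skew_TAR_vertices V' E'"
  have finV': "finite V'" using sg_facts(1)[OF sg(1)] .
  have V'F: "V' \<in> ?F'" using forcing_top unfolding skew_TAR_vertices_def by simp
  have "\<phi> V' \<in> ?F" using bij V'F unfolding bij_betw_def by blast
  then have sub: "\<phi> V' \<subseteq> ?V" unfolding skew_TAR_vertices_def skew_forcing_set_def by blast
  have "card V' = skew_TAR_degree V' E' V'" using sg_deg_top[OF sg] by simp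
  also have "\<dots> = skew_TAR_degree ?V ?E (\<phi> V')" using iso_deg[OF bij adj V'F] by simp
  also have "\<dots> \<le> card ?V" using deg_le_gen[OF cmp_V_fin sub] .
  finally have le1: "card V' \<le> card ?V" .
  have "?V \<in> ?F" using forcing_top unfolding skew_TAR_vertices_def by simp
  then obtain S where S: "S \<in> ?F'" "\<phi> S = ?V" using bij unfolding bij_betw_def by (metis imageE)
  have SV: "S \<subseteq> V'" using S(1) unfolding skew_TAR_vertices_def skew_forcing_set_def by blast
  have "card ?V = skew_TAR_degree ?V ?E ?V" using deg_top_cmp[OF tns] cmp_V_card by simp
  also have "\<dots> = skew_TAR_degree V' E' S" using iso_deg[OF bij adj S(1)] S(2) by simp
  also have "\<dots> \<le> card V'" using deg_le_gen[OF finV' SV] .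
  finally show ?thesis using le1 by simp
qed

lemma symdiff_shift:
  "((((S - C) \<union> (C - S)) - ((T - C) \<union> (C - T))) \<union> (((T - C) \<union> (C - T)) - ((S - C) \<union> (C - S))))
    = (S - T) \<union> (T - S)"
  by auto

lemma psi_auto:
  assumes tns: "t \<ge> 2" "\<forall>i<t. ns i \<ge> 1"
    and C: "C \<subseteq> cmp_V t ns"
    and cond: "\<And>A. adm (cmp_V t ns) A \<Longrightarrow> adm (cmp_V t ns) ((A - C) \<union> (C - A))"
  shows "bij_betw (\<lambda>S. (S - C) \<union> (C - S)) (skew_TAR_vertices (cmp_V t ns) (cmp_E t ns)) (skew_TAR_vertices (cmp_V t ns) (cmp_E t ns))"
    "\<forall>x\<in>skew_TAR_vertices (cmp_V t ns) (cmp_E t ns). \<forall>y\<in>skew_TAR_vertices (cmp_V t ns) (cmp_E t ns).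
       TAR_adj x y \<longleftrightarrow> TAR_adj ((x - C) \<union> (C - x)) ((y - C) \<union> (C - y))"
proof -
  let ?V = "cmp_V t ns" and ?E = "cmp_E t ns"
  let ?F = "skew_TAR_vertices ?V ?E"
  let ?psi = "\<lambda>S. (S - C) \<union> (C - S)"
  have maps: "\<And>S. S \<in> ?F \<Longrightarrow> ?psi S \<in> ?F"
  proof -
    fix S assume "S \<in> ?F"
    then have h: "S \<subseteq> ?V" "adm ?V (?V - S)" using F_char[OF tns] by auto
    have "?psi S \<subseteq> ?V" using h(1) C by blast
    moreover have "?V - ?psi S = ((?V - S) - C) \<union> (C - (?V - S))" using h(1) C by blast
    ultimately show "?psi S \<in> ?F" using F_char[OF tns] cond[OF h(2)] by simp
  qed
  have inv: "\<And>S. ?psi (?psi S) = S" by auto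
  show "bij_betw ?psi ?F ?F"
    by (rule bij_betw_byWitness[where f' = ?psi]) (use maps inv in auto)
  show "\<forall>x\<in>?F. \<forall>y\<in>?F. TAR_adj x y \<longleftrightarrow> TAR_adj (?psi x) (?psi y)"
    unfolding TAR_adj_def using symdiff_shift by metis
qed

lemma subsets_pair: "B \<subseteq> {u, v} \<Longrightarrow> B = {} \<or> B = {u} \<or> B = {v} \<or> B = {u, v}"
  by (cases "u \<in> B"; cases "v \<in> B") auto

lemma adm_delta_two:
  assumes "cmp_V t ns = {u, v}" "fst u \<noteq> fst v" "C \<subseteq> cmp_V t ns" "adm (cmp_V t ns) A"
  shows "adm (cmp_V t ns) ((A - C) \<union> (C - A))"
proof -
  have uv: "u \<noteq> v" using assms(2) by auto
  have "A \<subseteq> cmp_V t ns" using assms(4) unfolding adm_def by blast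
  then have "(A - C) \<union> (C - A) \<subseteq> {u, v}" using assms(1,3) by blast
  then have "(A - C) \<union> (C - A) = {} \<or> (A - C) \<union> (C - A) = {u} \<or> (A - C) \<union> (C - A) = {v} \<or> (A - C) \<union> (C - A) = {u, v}"
    by (rule subsets_pair)
  moreover have "adm (cmp_V t ns) {}" "adm (cmp_V t ns) {u}" "adm (cmp_V t ns) {v}" "adm (cmp_V t ns) {u, v}"
    using adm_empty adm_single adm_pair[OF uv] assms(1,2) by auto
  ultimately show ?thesis by auto
qed

lemma adm_delta_star:
  assumes "y0 \<in> V" "\<forall>z\<in>V. z \<noteq> y0 \<longrightarrow> fst z \<noteq> fst y0"
    "\<forall>z\<in>V. \<forall>z'\<in>V. z \<noteq> y0 \<longrightarrow> z' \<noteq> y0 \<longrightarrow> fst z = fst z'" "adm V A"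
  shows "adm V ((A - {y0}) \<union> ({y0} - A))"
proof -
  have "A = {} \<or> (\<exists>y\<in>V. A = {y}) \<or> (\<exists>a\<in>V. \<exists>b\<in>V. fst a \<noteq> fst b \<and> A = {a, b})"
    using assms(4) unfolding adm_def by blast
  then show ?thesis
  proof (elim disjE)
    assume "A = {}"
    then show ?thesis using adm_single assms(1) by simp
  next
    assume "\<exists>y\<in>V. A = {y}"
    then obtain y where y: "y \<in> V" "A = {y}" by blast
    show ?thesis
    proof (cases "y = y0")
      case True then show ?thesis using y adm_empty by simp
    next
      case False
      then have "(A - {y0}) \<union> ({y0} - A) = {y, y0}" using y by auto
      moreover have "fst y \<noteq> fst y0" using assms(2) y False by blast
      ultimately show ?thesis using adm_pair[OF False] y assms(1) by simp
    qed
  next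
    assume "\<exists>a\<in>V. \<exists>b\<in>V. fst a \<noteq> fst b \<and> A = {a, b}"
    then obtain a b where ab: "a \<in> V" "b \<in> V" "fst a \<noteq> fst b" "A = {a, b}" by blast
    have abn: "a \<noteq> b" using ab by auto
    show ?thesis
    proof (cases "a = y0")
      case True
      then have "(A - {y0}) \<union> ({y0} - A) = {b}" using ab abn by auto
      then show ?thesis using adm_single ab by simp
    next
      case False
      show ?thesis
      proof (cases "b = y0")
        case True
        then have "(A - {y0}) \<union> ({y0} - A) = {a}" using ab abn by auto
        then show ?thesis using adm_single ab by simp
      next
        case False
        then have "fst a = fst b" using assms(3) ab \<open>a \<noteq> y0\<close> by blast
        then show ?thesis using ab by simp
      qed
    qed
  qed
qed



lemma case_c:
  assumes tns: "t \<ge> 2" "\<forall>i<t. ns i \<ge> 1"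
    and sg: "simple_graph V' E'" "\<forall>x\<in>V'. \<exists>y. E' x y"
    and bij: "bij_betw \<phi> (skew_TAR_vertices V' E') (skew_TAR_vertices (cmp_V t ns) (cmp_E t ns))"
    and adj: "\<forall>x\<in>skew_TAR_vertices V' E'. \<forall>y\<in>skew_TAR_vertices V' E'. TAR_adj x y \<longleftrightarrow> TAR_adj (\<phi> x) (\<phi> y)"
    and y0: "y0 \<in> cmp_V t ns" "\<phi> V' = cmp_V t ns - {y0}"
    and mn: "card V' = card (cmp_V t ns)"
  shows "\<forall>z\<in>cmp_V t ns. z \<noteq> y0 \<longrightarrow> fst z \<noteq> fst y0"
    "\<forall>z\<in>cmp_V t ns. \<forall>z'\<in>cmp_V t ns. z \<noteq> y0 \<longrightarrow> z' \<noteq> y0 \<longrightarrow> fst z = fst z'"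
proof -
  let ?V = "cmp_V t ns" and ?E = "cmp_E t ns"
  let ?F = "skew_TAR_vertices ?V ?E" and ?F' = "skew_TAR_vertices V' E'"
  let ?n = "card ?V"
  have nsum: "?n = (\<Sum>i<t. ns i)" using cmp_V_card by simp
  have finV': "finite V'" using sg_facts(1)[OF sg(1)] .
  have V'F: "V' \<in> ?F'" using forcing_top unfolding skew_TAR_vertices_def by simp
  have inj: "inj_on \<phi> ?F'" using bij unfolding bij_betw_def by blast
  have surj: "\<And>X. X \<in> ?F \<Longrightarrow> \<exists>S\<in>?F'. \<phi> S = X"
  proof -
    fix X assume "X \<in> ?F"
    then have "X \<in> \<phi> ` ?F'" using bij unfolding bij_betw_def by simp
    then show "\<exists>S\<in>?F'. \<phi> S = X" by (metis imageE)
  qed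
  have small: "\<And>S. S \<in> ?F' \<Longrightarrow> card (V' - S) \<le> 2"
    using small_compl[OF tns sg bij adj] unfolding skew_TAR_vertices_def by blast
  have subF': "\<And>S. S \<in> ?F' \<Longrightarrow> S \<subseteq> V'" unfolding skew_TAR_vertices_def skew_forcing_set_def by blast
  have partle: "\<And>i. i < t \<Longrightarrow> ns i \<le> ?n"
  proof -
    fix i assume "i < t"
    then have "ns i = card {w \<in> ?V. fst w = i}" using cmp_part_card by simp
    also have "\<dots> \<le> ?n" using cmp_V_fin by (intro card_mono) auto
    finally show "ns i \<le> ?n" .
  qed
  have fy0: "fst y0 < t" using y0(1) unfolding cmp_V_def by auto
  have "skew_TAR_degree ?V ?E (?V - {y0}) = card V'"
    using iso_deg[OF bij adj V'F] sg_deg_top[OF sg] y0(2) by simp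
  then have "?n - ns (fst y0) + 1 = ?n" using deg_single[OF tns y0(1)] mn nsum by simp
  moreover have "ns (fst y0) \<ge> 1" "ns (fst y0) \<le> ?n" using tns(2) fy0 partle by auto
  ultimately have ns1: "ns (fst y0) = 1" by linarith
  have P0: "{w \<in> ?V. fst w = fst y0} = {y0}"
  proof -
    have "card {w \<in> ?V. fst w = fst y0} = 1" using cmp_part_card[OF fy0] ns1 by simp
    then obtain w where w: "{w \<in> ?V. fst w = fst y0} = {w}" using card_1_singleton_iff[of "{w \<in> ?V. fst w = fst y0}"] by auto
    moreover have "y0 \<in> {w \<in> ?V. fst w = fst y0}" using y0(1) by simp
    ultimately show ?thesis by auto
  qed
  show c1: "\<forall>z\<in>?V. z \<noteq> y0 \<longrightarrow> fst z \<noteq> fst y0"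
  proof (intro ballI impI notI)
    fix z assume "z \<in> ?V" "z \<noteq> y0" "fst z = fst y0"
    then have "z \<in> {w \<in> ?V. fst w = fst y0}" by simp
    then show False using P0 \<open>z \<noteq> y0\<close> by simp
  qed
  obtain R1 where R1: "R1 \<in> ?F'" "\<phi> R1 = ?V"
    using surj[of ?V] forcing_top unfolding skew_TAR_vertices_def by auto
  have "TAR_adj (?V - {y0}) (?V - {})" using adj_minus'[of "{y0}" ?V y0 "{}"] y0(1) by simp
  then have "TAR_adj (\<phi> V') (\<phi> R1)" using R1 y0(2) by simp
  then have aR1: "TAR_adj (V' - {}) R1" using adj V'F R1(1) by simp
  obtain y1 where y1: "y1 \<in> V'" "R1 = V' - {y1}"
    using adj_cases[OF _ subF'[OF R1(1)] aR1] by auto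
  have big: "\<And>z. z \<in> ?V \<Longrightarrow> z \<noteq> y0 \<Longrightarrow> ns (fst z) \<ge> ?n - 1"
  proof -
    fix z assume z: "z \<in> ?V" "z \<noteq> y0"
    obtain R2 where R2: "R2 \<in> ?F'" "\<phi> R2 = ?V - {z}"
      using surj[of "?V - {z}"] sg_single F_compl[OF tns, of "{z}"] adm_single z(1) by auto
    have "TAR_adj (?V - {}) (?V - insert z {})" using adj_insert[of "{}" ?V z] z(1) by simp
    then have "TAR_adj (\<phi> R1) (\<phi> R2)" using R1 R2 by simp
    then have aR2: "TAR_adj (V' - {y1}) R2" using adj R1(1) R2(1) y1(2) by simp
    have y1s: "{y1} \<subseteq> V'" using y1 by simp
    obtain s where s: "s \<in> V'" "(s \<in> {y1} \<and> R2 = V' - ({y1} - {s})) \<or> (s \<notin> {y1} \<and> R2 = V' - insert s {y1})"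
      using adj_cases[OF y1s subF'[OF R2(1)] aR2] by blast
    have "R2 \<noteq> V'"
    proof
      assume "R2 = V'"
      then have "?V - {z} = ?V - {y0}" using R2(2) y0(2) by simp
      then have "z \<notin> ?V - {y0}" by auto
      then show False using z by simp
    qed
    then have sy: "s \<noteq> y1" "R2 = V' - {s, y1}" using s by auto
    have "{T \<in> ?F'. TAR_adj R2 T} \<subseteq> {V' - {y1}, V' - {s}}"
    proof
      fix T assume T: "T \<in> {T \<in> ?F'. TAR_adj R2 T}"
      have sy1: "{s, y1} \<subseteq> V'" using s y1 by simp
      have "TAR_adj (V' - {s, y1}) T" using T sy by simp
      then obtain r where r: "r \<in> V'" "(r \<in> {s, y1} \<and> T = V' - ({s, y1} - {r})) \<or> (r \<notin> {s, y1} \<and> T = V' - insert r {s, y1})"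
        using adj_cases[OF sy1 subF'] T by blast
      show "T \<in> {V' - {y1}, V' - {s}}"
      proof (cases "r \<in> {s, y1}")
        case True
        then have "T = V' - ({s, y1} - {r})" using r by blast
        then show ?thesis using True sy(1) by auto
      next
        case False
        then have "T = V' - insert r {s, y1}" using r by blast
        then have "V' - T = {r, s, y1}" using r(1) sy1 by auto
        moreover have "card {r, s, y1} = 3" using False sy(1) by auto
        ultimately show ?thesis using small T by fastforce
      qed
    qed
    then have "skew_TAR_degree V' E' R2 \<le> card {V' - {y1}, V' - {s}}"
      unfolding skew_TAR_degree_def by (intro card_mono) auto
    also have "\<dots> \<le> 2" by (simp add: card_insert_if)
    finally have "skew_TAR_degree ?V ?E (?V - {z}) \<le> 2" using iso_deg[OF bij adj R2(1)] R2(2) by simp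
    then have "?n - ns (fst z) + 1 \<le> 2" using deg_single[OF tns z(1)] nsum by simp
    then show "ns (fst z) \<ge> ?n - 1" by linarith
  qed
  show "\<forall>z\<in>?V. \<forall>z'\<in>?V. z \<noteq> y0 \<longrightarrow> z' \<noteq> y0 \<longrightarrow> fst z = fst z'"
  proof (intro ballI impI)
    fix z z' assume zz: "z \<in> ?V" "z' \<in> ?V" "z \<noteq> y0" "z' \<noteq> y0"
    have fz: "fst z < t" using zz(1) unfolding cmp_V_def by auto
    have sub: "{w \<in> ?V. fst w = fst z} \<subseteq> ?V - {y0}" using c1 zz by auto
    have "card (?V - {y0}) = ?n - 1" using y0(1) cmp_V_fin by simp
    also have "\<dots> \<le> ns (fst z)" using big zz by simp
    also have "\<dots> = card {w \<in> ?V. fst w = fst z}" using cmp_part_card[OF fz] by simp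
    finally have "{w \<in> ?V. fst w = fst z} = ?V - {y0}"
      using card_seteq[OF _ sub] cmp_V_fin by blast
    then have "z' \<in> {w \<in> ?V. fst w = fst z}" using zz by simp
    then show "fst z = fst z'" by simp
  qed
qed



lemma normalize:
  assumes tns: "t \<ge> 2" "\<forall>i<t. ns i \<ge> 1"
    and sg: "simple_graph V' E'" "\<forall>x\<in>V'. \<exists>y. E' x y"
    and bij: "bij_betw \<phi> (skew_TAR_vertices V' E') (skew_TAR_vertices (cmp_V t ns) (cmp_E t ns))"
    and adj: "\<forall>x\<in>skew_TAR_vertices V' E'. \<forall>y\<in>skew_TAR_vertices V' E'. TAR_adj x y \<longleftrightarrow> TAR_adj (\<phi> x) (\<phi> y)"
    and mn: "card V' = card (cmp_V t ns)"
  shows "\<exists>\<phi>'. bij_betw \<phi>' (skew_TAR_vertices V' E') (skew_TAR_vertices (cmp_V t ns) (cmp_E t ns))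
     \<and> (\<forall>x\<in>skew_TAR_vertices V' E'. \<forall>y\<in>skew_TAR_vertices V' E'. TAR_adj x y \<longleftrightarrow> TAR_adj (\<phi>' x) (\<phi>' y))
     \<and> \<phi>' V' = cmp_V t ns"
proof -
  let ?V = "cmp_V t ns" and ?E = "cmp_E t ns"
  let ?F = "skew_TAR_vertices ?V ?E" and ?F' = "skew_TAR_vertices V' E'"
  have V'F: "V' \<in> ?F'" using forcing_top unfolding skew_TAR_vertices_def by simp
  define X0 where "X0 = \<phi> V'"
  have X0F: "X0 \<in> ?F" using bij V'F unfolding bij_betw_def X0_def by blast
  then have X0V: "X0 \<subseteq> ?V" unfolding skew_TAR_vertices_def skew_forcing_set_def by blast
  define C where "C = ?V - X0"
  have CV: "C \<subseteq> ?V" unfolding C_def by blast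
  have degX0: "skew_TAR_degree ?V ?E X0 = card ?V"
    using iso_deg[OF bij adj V'F] sg_deg_top[OF sg] mn unfolding X0_def by simp
  have cond: "\<And>A. adm ?V A \<Longrightarrow> adm ?V ((A - C) \<union> (C - A))"
  proof -
    fix A assume A: "adm ?V A"
    have "X0 = ?V \<or> (\<exists>y\<in>?V. X0 = ?V - {y}) \<or> (\<exists>u\<in>?V. \<exists>v\<in>?V. fst u \<noteq> fst v \<and> X0 = ?V - {u, v})"
      using F_forms[OF tns X0F] .
    then show "adm ?V ((A - C) \<union> (C - A))"
    proof (elim disjE)
      assume "X0 = ?V"
      then have "C = {}" unfolding C_def by simp
      then show ?thesis using A by simp
    next
      assume "\<exists>y\<in>?V. X0 = ?V - {y}"
      then obtain y0 where y0: "y0 \<in> ?V" "X0 = ?V - {y0}" by blast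
      have "C = {y0}" unfolding C_def using y0 by auto
      note cc = case_c[OF tns sg bij adj y0(1) y0(2)[unfolded X0_def] mn]
      have "adm ?V ((A - {y0}) \<union> ({y0} - A))" by (rule adm_delta_star[OF y0(1) cc(1) cc(2) A])
      then show ?thesis using \<open>C = {y0}\<close> by simp
    next
      assume "\<exists>u\<in>?V. \<exists>v\<in>?V. fst u \<noteq> fst v \<and> X0 = ?V - {u, v}"
      then obtain u v where uv: "u \<in> ?V" "v \<in> ?V" "fst u \<noteq> fst v" "X0 = ?V - {u, v}" by blast
      have uvn: "u \<noteq> v" using uv by auto
      have "card ?V = 2" using degX0 deg_pair[OF tns uv(1,2,3)] uv(4) by simp
      moreover have sub: "{u, v} \<subseteq> ?V" using uv by simp
      moreover have "card {u, v} = 2" using uvn by simp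
      ultimately have Vuv: "?V = {u, v}" using card_seteq[OF cmp_V_fin sub] by simp
      show ?thesis using adm_delta_two[OF Vuv uv(3) CV A] .
    qed
  qed
  let ?psi = "\<lambda>S. (S - C) \<union> (C - S)"
  note ps = psi_auto[OF tns CV cond]
  have b2: "bij_betw (?psi \<circ> \<phi>) ?F' ?F" using bij_betw_trans[OF bij ps(1)] .
  have a2: "\<forall>x\<in>?F'. \<forall>y\<in>?F'. TAR_adj x y \<longleftrightarrow> TAR_adj ((?psi \<circ> \<phi>) x) ((?psi \<circ> \<phi>) y)"
  proof (intro ballI)
    fix x y assume xy: "x \<in> ?F'" "y \<in> ?F'"
    then have "\<phi> x \<in> ?F" "\<phi> y \<in> ?F" using bij unfolding bij_betw_def by blast+
    then show "TAR_adj x y \<longleftrightarrow> TAR_adj ((?psi \<circ> \<phi>) x) ((?psi \<circ> \<phi>) y)"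
      using ps(2) adj xy by simp
  qed
  have "(?psi \<circ> \<phi>) V' = (X0 - C) \<union> (C - X0)" unfolding X0_def by simp
  also have "\<dots> = ?V" using X0V unfolding C_def by auto
  finally have "(?psi \<circ> \<phi>) V' = ?V" .
  then show ?thesis using b2 a2 by blast
qed

lemma case_a:
  assumes tns: "t \<ge> 2" "\<forall>i<t. ns i \<ge> 1"
    and sg: "simple_graph V' E'" "\<forall>x\<in>V'. \<exists>y. E' x y"
    and bij: "bij_betw \<phi> (skew_TAR_vertices V' E') (skew_TAR_vertices (cmp_V t ns) (cmp_E t ns))"
    and adj: "\<forall>x\<in>skew_TAR_vertices V' E'. \<forall>y\<in>skew_TAR_vertices V' E'. TAR_adj x y \<longleftrightarrow> TAR_adj (\<phi> x) (\<phi> y)"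
    and mn: "card V' = card (cmp_V t ns)"
    and top: "\<phi> V' = cmp_V t ns"
  shows "graph_iso V' E' (cmp_V t ns) (cmp_E t ns)"
proof -
  let ?V = "cmp_V t ns" and ?E = "cmp_E t ns"
  let ?F = "skew_TAR_vertices ?V ?E" and ?F' = "skew_TAR_vertices V' E'"
  have finV': "finite V'" using sg_facts(1)[OF sg(1)] .
  have V'F: "V' \<in> ?F'" using forcing_top unfolding skew_TAR_vertices_def by simp
  have inj: "inj_on \<phi> ?F'" using bij unfolding bij_betw_def by blast
  have imF: "\<And>S. S \<in> ?F' \<Longrightarrow> \<phi> S \<in> ?F" using bij unfolding bij_betw_def by blast
  have surj: "\<And>X. X \<in> ?F \<Longrightarrow> \<exists>S\<in>?F'. \<phi> S = X"
  proof -
    fix X assume "X \<in> ?F"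
    then have "X \<in> \<phi> ` ?F'" using bij unfolding bij_betw_def by simp
    then show "\<exists>S\<in>?F'. \<phi> S = X" by (metis imageE)
  qed
  have smallS: "\<forall>S. skew_forcing_set V' E' S \<longrightarrow> card (V' - S) \<le> 2"
    using small_compl[OF tns sg bij adj] by blast
  have small: "\<And>S. S \<in> ?F' \<Longrightarrow> card (V' - S) \<le> 2"
    using smallS unfolding skew_TAR_vertices_def by blast
  have subF': "\<And>S. S \<in> ?F' \<Longrightarrow> S \<subseteq> V'" unfolding skew_TAR_vertices_def skew_forcing_set_def by blast
  have subF: "\<And>S. S \<in> ?F \<Longrightarrow> S \<subseteq> ?V" unfolding skew_TAR_vertices_def skew_forcing_set_def by blast
  have singF': "\<And>y. y \<in> V' \<Longrightarrow> V' - {y} \<in> ?F'"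
    using sg_single[OF sg] unfolding skew_TAR_vertices_def by simp
  have ex: "\<forall>y\<in>V'. \<exists>s. s \<in> ?V \<and> \<phi> (V' - {y}) = ?V - {s}"
  proof
    fix y assume y: "y \<in> V'"
    have "TAR_adj (V' - {}) (V' - insert y {})" using adj_insert[of "{}" V' y] y by simp
    then have "TAR_adj V' (V' - {y})" by simp
    then have "TAR_adj (\<phi> V') (\<phi> (V' - {y}))" using adj V'F singF'[OF y] by blast
    then have a: "TAR_adj (?V - {}) (\<phi> (V' - {y}))" using top by simp
    obtain s where "s \<in> ?V" "(s \<in> {} \<and> \<phi> (V' - {y}) = ?V - ({} - {s})) \<or> (s \<notin> {} \<and> \<phi> (V' - {y}) = ?V - insert s {})"
      using adj_cases[OF _ subF[OF imF[OF singF'[OF y]]] a] by blast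
    then have "s \<in> ?V" "\<phi> (V' - {y}) = ?V - {s}" by auto
    then show "\<exists>s. s \<in> ?V \<and> \<phi> (V' - {y}) = ?V - {s}" by blast
  qed
  from bchoice[OF ex] obtain f where f: "\<forall>y\<in>V'. f y \<in> ?V \<and> \<phi> (V' - {y}) = ?V - {f y}" by blast
  have injf: "inj_on f V'"
  proof (rule inj_onI)
    fix a b assume ab: "a \<in> V'" "b \<in> V'" "f a = f b"
    then have "\<phi> (V' - {a}) = \<phi> (V' - {b})" using f by simp
    then have "V' - {a} = V' - {b}" using inj singF' ab unfolding inj_on_def by blast
    then have "a \<notin> V' - {b}" by auto
    then show "a = b" using ab by simp
  qed
  have imf: "f ` V' \<subseteq> ?V" using f by auto
  have "card (f ` V') = card ?V" using card_image[OF injf] mn by simp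
  then have "f ` V' = ?V" using card_seteq[OF cmp_V_fin imf] by simp
  then have bijf: "bij_betw f V' ?V" using injf unfolding bij_betw_def by simp
  have core: "\<And>x y. x \<in> V' \<Longrightarrow> y \<in> V' \<Longrightarrow> x \<noteq> y \<Longrightarrow>
      (V' - {x, y} \<in> ?F' \<longleftrightarrow> ?V - {f x, f y} \<in> ?F)"
  proof -
    fix x y assume xy: "x \<in> V'" "y \<in> V'" "x \<noteq> y"
    have fxy: "f x \<noteq> f y" using injf xy unfolding inj_on_def by blast
    have fxV: "f x \<in> ?V" "f y \<in> ?V" using f xy by auto
    have px: "\<phi> (V' - {x}) = ?V - {f x}" and py: "\<phi> (V' - {y}) = ?V - {f y}" using f xy by auto
    have xyV: "{x, y} \<subseteq> V'" using xy by simp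
    have e1: "{x} = {x, y} - {y}" "{y} = {x, y} - {x}" using xy by auto
    have ax: "TAR_adj (V' - {x, y}) (V' - {x})" using adj_minus'[OF xyV _ e1(1)] by simp
    have ay: "TAR_adj (V' - {x, y}) (V' - {y})" using adj_minus'[OF xyV _ e1(2)] by simp
    have fV: "{f x, f y} \<subseteq> ?V" using fxV by simp
    have e2: "{f x} = {f x, f y} - {f y}" "{f y} = {f x, f y} - {f x}" using fxy by auto
    have bx: "TAR_adj (?V - {f x, f y}) (?V - {f x})" using adj_minus'[OF fV _ e2(1)] by simp
    have by': "TAR_adj (?V - {f x, f y}) (?V - {f y})" using adj_minus'[OF fV _ e2(2)] by simp
    show "V' - {x, y} \<in> ?F' \<longleftrightarrow> ?V - {f x, f y} \<in> ?F"
    proof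
      assume P: "V' - {x, y} \<in> ?F'"
      define Q where "Q = \<phi> (V' - {x, y})"
      have QF: "Q \<in> ?F" using imF[OF P] unfolding Q_def .
      define A where "A = ?V - Q"
      have QA: "Q = ?V - A" unfolding A_def using subF[OF QF] by blast
      have admA: "adm ?V A" using F_char[OF tns, of Q] QF unfolding A_def by simp
      have AV: "A \<subseteq> ?V" unfolding A_def by blast
      have "finite A" "card A \<le> 2" using adm_card[OF admA] by auto
      moreover have "A \<noteq> {}"
      proof
        assume "A = {}"
        then have "Q = \<phi> V'" using QA top by simp
        then have "V' - {x, y} = V'" using inj_onD[OF inj _ P V'F] unfolding Q_def by simp
        then show False using xy by auto
      qed
      moreover have "TAR_adj (?V - A) (?V - {f x})"
        using iffD1[OF adj[rule_format, OF P singF'[OF xy(1)]] ax] px unfolding QA[symmetric] Q_def by simp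
      moreover have "TAR_adj (?V - A) (?V - {f y})"
        using iffD1[OF adj[rule_format, OF P singF'[OF xy(2)]] ay] py unfolding QA[symmetric] Q_def by simp
      ultimately have "A = {f x, f y}" using two_nbrs[OF _ _ _ AV fxV fxy] by blast
      then show "?V - {f x, f y} \<in> ?F" using QA QF by simp
    next
      assume P: "?V - {f x, f y} \<in> ?F"
      obtain R where R: "R \<in> ?F'" "\<phi> R = ?V - {f x, f y}" using surj[OF P] by blast
      define A where "A = V' - R"
      have RA: "R = V' - A" unfolding A_def using subF'[OF R(1)] by blast
      have AV: "A \<subseteq> V'" unfolding A_def by blast
      have "finite A" using finV' AV finite_subset by blast
      moreover have "card A \<le> 2" using small[OF R(1)] unfolding A_def .
      moreover have "A \<noteq> {}"
      proof
        assume "A = {}"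
        then have "\<phi> R = ?V" using RA top by simp
        then have "f x \<notin> ?V" using R(2) by auto
        then show False using fxV by simp
      qed
      moreover have "TAR_adj R (V' - {x})"
        using iffD2[OF adj[rule_format, OF R(1) singF'[OF xy(1)]]] bx px R(2) by simp
      moreover have "TAR_adj R (V' - {y})"
        using iffD2[OF adj[rule_format, OF R(1) singF'[OF xy(2)]]] by' py R(2) by simp
      ultimately have "A = {x, y}" using two_nbrs[OF _ _ _ AV xy(1,2,3)] RA by simp
      then show "V' - {x, y} \<in> ?F'" using RA R(1) by simp
    qed
  qed
  have edges: "\<forall>x\<in>V'. \<forall>y\<in>V'. E' x y \<longleftrightarrow> ?E (f x) (f y)"
  proof (intro ballI)
    fix x y assume xy: "x \<in> V'" "y \<in> V'"
    have fxV: "f x \<in> ?V" "f y \<in> ?V" using f xy by auto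
    show "E' x y \<longleftrightarrow> ?E (f x) (f y)"
    proof (cases "x = y")
      case True
      then show ?thesis using sg_facts(5)[OF sg(1)] unfolding cmp_E_def by simp
    next
      case False
      have fxy: "f x \<noteq> f y" using injf xy False unfolding inj_on_def by blast
      have "E' x y \<longleftrightarrow> nbhd E' x \<noteq> nbhd E' y" using sg_edge_iff[OF sg xy smallS] .
      also have "\<dots> \<longleftrightarrow> skew_forcing_set V' E' (V' - {x, y})" using sg_pair_iff[OF sg xy False] by simp
      also have "\<dots> \<longleftrightarrow> V' - {x, y} \<in> ?F'" unfolding skew_TAR_vertices_def by simp
      also have "\<dots> \<longleftrightarrow> ?V - {f x, f y} \<in> ?F" using core[OF xy False] .
      also have "\<dots> \<longleftrightarrow> adm ?V {f x, f y}" using F_compl[OF tns, of "{f x, f y}"] fxV by simp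
      also have "\<dots> \<longleftrightarrow> fst (f x) \<noteq> fst (f y)" using adm_pair[OF fxy] fxV by simp
      also have "\<dots> \<longleftrightarrow> ?E (f x) (f y)" using fxV unfolding cmp_E_def by simp
      finally show ?thesis .
    qed
  qed
  show ?thesis unfolding graph_iso_def using bijf edges by blast
qed



theorem theorem5p2:
  fixes t :: nat and ns :: "nat \<Rightarrow> nat"
  assumes "t \<ge> 2" and "\<forall>i<t. ns i \<ge> 1"
  defines "V \<equiv> cmp_V t ns" and "E \<equiv> cmp_E t ns" and "n \<equiv> (\<Sum>i<t. ns i)"
  shows "(\<forall>S. minimal_skew_forcing_set V E S \<longleftrightarrow>
            (\<exists>u\<in>V. \<exists>v\<in>V. fst u \<noteq> fst v \<and> S = V - {u, v}))
       \<and> (\<forall>S. (S \<in> skew_TAR_vertices V E \<and> card S = n - 2) \<longleftrightarrow>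
            (\<exists>u\<in>V. \<exists>v\<in>V. fst u \<noteq> fst v \<and> S = V - {u, v}))
       \<and> (\<forall>u\<in>V. \<forall>v\<in>V. fst u \<noteq> fst v \<longrightarrow> skew_TAR_degree V E (V - {u, v}) = 2)
       \<and> (\<forall>y\<in>V. skew_forcing_set V E (V - {y}) \<and>
            skew_TAR_degree V E (V - {y}) = n - ns (fst y) + 1)
       \<and> (\<forall>(V' :: 'b set) E'. simple_graph V' E' \<and> (\<forall>x\<in>V'. \<exists>y. E' x y) \<and>
            graph_iso (skew_TAR_vertices V' E') TAR_adj (skew_TAR_vertices V E) TAR_adj
            \<longrightarrow> graph_iso V' E' V E)"
proof -
  note tns = assms(1,2)
  have P1: "\<forall>S. minimal_skew_forcing_set V E S \<longleftrightarrow>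
            (\<exists>u\<in>V. \<exists>v\<in>V. fst u \<noteq> fst v \<and> S = V - {u, v})"
    unfolding V_def E_def by (intro allI) (rule part1[OF tns])
  have P2: "\<forall>S. (S \<in> skew_TAR_vertices V E \<and> card S = n - 2) \<longleftrightarrow>
            (\<exists>u\<in>V. \<exists>v\<in>V. fst u \<noteq> fst v \<and> S = V - {u, v})"
    unfolding V_def E_def n_def by (intro allI) (rule part2[OF tns])
  have P3: "\<forall>u\<in>V. \<forall>v\<in>V. fst u \<noteq> fst v \<longrightarrow> skew_TAR_degree V E (V - {u, v}) = 2"
    unfolding V_def E_def using deg_pair[OF tns] by blast
  have P4: "\<forall>y\<in>V. skew_forcing_set V E (V - {y}) \<and>
            skew_TAR_degree V E (V - {y}) = n - ns (fst y) + 1"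
  proof
    fix y assume y: "y \<in> V"
    have "V - {y} \<in> skew_TAR_vertices V E"
      using F_compl[OF tns, of "{y}"] adm_single[of "cmp_V t ns" y] y unfolding V_def E_def by simp
    then have "skew_forcing_set V E (V - {y})" unfolding skew_TAR_vertices_def by simp
    moreover have "skew_TAR_degree V E (V - {y}) = n - ns (fst y) + 1"
      using deg_single[OF tns, of y] y unfolding V_def E_def n_def by simp
    ultimately show "skew_forcing_set V E (V - {y}) \<and> skew_TAR_degree V E (V - {y}) = n - ns (fst y) + 1"
      by simp
  qed
  have P5: "\<forall>(V' :: 'b set) E'. simple_graph V' E' \<and> (\<forall>x\<in>V'. \<exists>y. E' x y) \<and>
            graph_iso (skew_TAR_vertices V' E') TAR_adj (skew_TAR_vertices V E) TAR_adj
            \<longrightarrow> graph_iso V' E' V E"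
  proof (intro allI impI)
    fix V' :: "'b set" and E'
    assume h: "simple_graph V' E' \<and> (\<forall>x\<in>V'. \<exists>y. E' x y) \<and>
            graph_iso (skew_TAR_vertices V' E') TAR_adj (skew_TAR_vertices V E) TAR_adj"
    then have sg: "simple_graph V' E'" "\<forall>x\<in>V'. \<exists>y. E' x y" by simp_all
    obtain \<phi> where bij: "bij_betw \<phi> (skew_TAR_vertices V' E') (skew_TAR_vertices (cmp_V t ns) (cmp_E t ns))"
      and adj: "\<forall>x\<in>skew_TAR_vertices V' E'. \<forall>y\<in>skew_TAR_vertices V' E'. TAR_adj x y \<longleftrightarrow> TAR_adj (\<phi> x) (\<phi> y)"
      using h unfolding graph_iso_def V_def E_def by blast
    have mn: "card V' = card (cmp_V t ns)" using m_eq_n[OF tns sg bij adj] .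
    obtain \<phi>' where n1: "bij_betw \<phi>' (skew_TAR_vertices V' E') (skew_TAR_vertices (cmp_V t ns) (cmp_E t ns))"
      and n2: "\<forall>x\<in>skew_TAR_vertices V' E'. \<forall>y\<in>skew_TAR_vertices V' E'. TAR_adj x y \<longleftrightarrow> TAR_adj (\<phi>' x) (\<phi>' y)"
      and n3: "\<phi>' V' = cmp_V t ns"
      using normalize[OF tns sg bij adj mn] by blast
    show "graph_iso V' E' V E" unfolding V_def E_def using case_a[OF tns sg n1 n2 mn n3] .
  qed
  show ?thesis using P1 P2 P3 P4 P5 by (intro conjI)
qed


end
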